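(* Let $m,n\in \mathbb{Z}$ and let $c$ be a nonzero integer with $c\mid n^2$, and let $f(X)=X^6+(n^2/c-2m)X^4+(m^2-2n)X^2+c$. Then $\mathrm{Gal}(f/\mathbb{Q})\cong C_6$ if and only if all of the following hold: (i) $-c$ is not a square of an integer; (ii) $g(X):=X^3+(n^2/c-2m)X^2+(m^2-2n)X+c$ (so that $f(X)=g(X^2)$) is irreducible over $\mathbb{Q}$; (iii) $d(m,n,c):= -(4m^3c - m^2n^2 - 18mnc + 4n^3 + 27c^2)$ is a square of an integer.
   Context: $\mathrm{Gal}(f/\mathbb{Q})$ denotes the Galois group of the splitting field of $f$ over $\mathbb{Q}$, and $C_6$ the cyclic group of order $6$. *)

theory Defs
  imports Complex_Main "HOL-Computational_Algebra.Polynomial" "HOL-Algebra.Elementary_Groups"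
begin

definition croots :: "int poly \<Rightarrow> complex set" where
  "croots p = {z. poly (map_poly of_int p) z = 0}"

definition is_csubfield :: "complex set \<Rightarrow> bool" where
  "is_csubfield K \<longleftrightarrow> 0 \<in> K \<and> 1 \<in> K \<and>
     (\<forall>x\<in>K. \<forall>y\<in>K. x + y \<in> K \<and> x - y \<in> K \<and> x * y \<in> K) \<and>
     (\<forall>x\<in>K. x \<noteq> 0 \<longrightarrow> inverse x \<in> K)"

text \<open>Splitting field of p over Q, realised inside C: the smallest subfield of C
  containing all complex roots of p (it automatically contains Q).\<close>
definition splitting_field :: "int poly \<Rightarrow> complex set" where
  "splitting_field p = \<Inter>{K. is_csubfield K \<and> croots p \<subseteq> K}"

definition field_auts :: "complex set \<Rightarrow> (complex \<Rightarrow> complex) set" where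
  "field_auts K = {\<sigma>. \<sigma> \<in> extensional K \<and> bij_betw \<sigma> K K \<and>
      (\<forall>x\<in>K. \<forall>y\<in>K. \<sigma> (x + y) = \<sigma> x + \<sigma> y \<and> \<sigma> (x * y) = \<sigma> x * \<sigma> y) \<and>
      (\<forall>q\<in>\<rat>. q \<in> K \<longrightarrow> \<sigma> q = q)}"

definition galois_group :: "int poly \<Rightarrow> (complex \<Rightarrow> complex) monoid" where
  "galois_group p =
     \<lparr>carrier = field_auts (splitting_field p),
      monoid.mult = (\<lambda>\<sigma> \<tau>. restrict (\<sigma> \<circ> \<tau>) (splitting_field p)),
      one = restrict id (splitting_field p)\<rparr>"

end

theory Submission
  imports Defs "HOL-Computational_Algebra.Fundamental_Theorem_Algebra"
    "HOL-Computational_Algebra.Polynomial_Factorial" "HOL-Computational_Algebra.Field_as_Ring"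
begin

lemma csf_basic:
  shows "is_csubfield K \<Longrightarrow> 0 \<in> K" "is_csubfield K \<Longrightarrow> 1 \<in> K"
    "is_csubfield K \<Longrightarrow> x \<in> K \<Longrightarrow> y \<in> K \<Longrightarrow> x + y \<in> K"
    "is_csubfield K \<Longrightarrow> x \<in> K \<Longrightarrow> y \<in> K \<Longrightarrow> x - y \<in> K"
    "is_csubfield K \<Longrightarrow> x \<in> K \<Longrightarrow> y \<in> K \<Longrightarrow> x * y \<in> K"
    "is_csubfield K \<Longrightarrow> x \<in> K \<Longrightarrow> inverse x \<in> K"
  unfolding is_csubfield_def by (simp_all, cases "x = 0", auto)

lemma csf_uminus: "is_csubfield K \<Longrightarrow> x \<in> K \<Longrightarrow> - x \<in> K"
  using csf_basic(4)[of K 0 x] csf_basic(1)[of K] by simp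

lemma csf_divide: "is_csubfield K \<Longrightarrow> x \<in> K \<Longrightarrow> y \<in> K \<Longrightarrow> x / y \<in> K"
  by (simp add: divide_inverse csf_basic)

lemma csf_power: "is_csubfield K \<Longrightarrow> x \<in> K \<Longrightarrow> x ^ k \<in> K"
  by (induction k) (auto simp: csf_basic)

lemma csf_of_nat: "is_csubfield K \<Longrightarrow> of_nat k \<in> K"
  by (induction k) (auto simp: csf_basic)

lemma csf_of_int: "is_csubfield K \<Longrightarrow> of_int k \<in> K"
proof -
  assume K: "is_csubfield K"
  show ?thesis
  proof (cases "k \<ge> 0")
    case True
    then have "of_int k = (of_nat (nat k) :: complex)" by simp
    then show ?thesis using K csf_of_nat by metis
  next
    case False
    then have "of_int k = - (of_nat (nat (-k)) :: complex)" by simp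
    then show ?thesis using K csf_of_nat csf_uminus by metis
  qed
qed

lemma csf_of_rat: "is_csubfield K \<Longrightarrow> of_rat q \<in> K"
proof -
  assume K: "is_csubfield K"
  obtain a b where "q = Rat.Fract a b" "b > 0" by (cases q) auto
  then have "of_rat q = (of_int a / of_int b :: complex)"
    by (simp add: of_rat_rat)
  then show ?thesis using K csf_divide csf_of_int by metis
qed

lemma csf_Rats: "is_csubfield K \<Longrightarrow> x \<in> \<rat> \<Longrightarrow> x \<in> K"
  by (auto elim!: Rats_cases simp: csf_of_rat)

lemma csf_poly_int: "is_csubfield K \<Longrightarrow> x \<in> K \<Longrightarrow> poly (map_poly of_int p) x \<in> K"
  by (induction p) (auto simp: map_poly_pCons csf_basic csf_of_int)

lemma csf_poly_rat: "is_csubfield K \<Longrightarrow> x \<in> K \<Longrightarrow> poly (map_poly of_rat p) x \<in> K"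
  by (induction p) (auto simp: map_poly_pCons csf_basic csf_of_rat)

lemma csf_UNIV: "is_csubfield UNIV"
  by (simp add: is_csubfield_def)

lemma csf_Inter: "(\<And>K. K \<in> S \<Longrightarrow> is_csubfield K) \<Longrightarrow> is_csubfield (\<Inter>S)"
  unfolding is_csubfield_def by blast

lemma sf_csubfield: "is_csubfield (splitting_field p)"
  unfolding splitting_field_def by (rule csf_Inter) auto

lemma sf_roots: "croots p \<subseteq> splitting_field p"
  unfolding splitting_field_def by auto

lemma sf_minimal: "is_csubfield K \<Longrightarrow> croots p \<subseteq> K \<Longrightarrow> splitting_field p \<subseteq> K"
  unfolding splitting_field_def by auto

locale aut =
  fixes K and \<sigma> :: "complex \<Rightarrow> complex"
  assumes K: "is_csubfield K" and s: "\<sigma> \<in> field_auts K"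
begin

lemma bij: "bij_betw \<sigma> K K" and ext: "\<sigma> \<in> extensional K"
  using s by (auto simp: field_auts_def)

lemma inK: "x \<in> K \<Longrightarrow> \<sigma> x \<in> K"
  using bij by (auto simp: bij_betw_def)

lemma inj: "x \<in> K \<Longrightarrow> y \<in> K \<Longrightarrow> \<sigma> x = \<sigma> y \<longleftrightarrow> x = y"
  using bij by (auto simp: bij_betw_def inj_on_def)

lemma add: "x \<in> K \<Longrightarrow> y \<in> K \<Longrightarrow> \<sigma> (x + y) = \<sigma> x + \<sigma> y"
  and mult: "x \<in> K \<Longrightarrow> y \<in> K \<Longrightarrow> \<sigma> (x * y) = \<sigma> x * \<sigma> y"
  using s by (auto simp: field_auts_def)

lemma rat: "x \<in> \<rat> \<Longrightarrow> \<sigma> x = x"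
  using s K csf_Rats by (auto simp: field_auts_def)

lemma of_rat [simp]: "\<sigma> (of_rat q) = of_rat q" and of_int [simp]: "\<sigma> (of_int k) = of_int k"
  and zero [simp]: "\<sigma> 0 = 0" and one [simp]: "\<sigma> 1 = 1"
  by (auto intro!: rat)

lemma numeral [simp]: "\<sigma> (numeral k) = numeral k"
  by (rule rat) auto

lemma uminus: "x \<in> K \<Longrightarrow> \<sigma> (- x) = - \<sigma> x"
proof -
  assume x: "x \<in> K"
  have "\<sigma> (-1 * x) = \<sigma> (-1) * \<sigma> x" using x K by (intro mult) (auto intro: csf_Rats)
  moreover have "\<sigma> (-1) = -1" by (rule rat) auto
  ultimately show ?thesis by simp
qed

lemma diff: "x \<in> K \<Longrightarrow> y \<in> K \<Longrightarrow> \<sigma> (x - y) = \<sigma> x - \<sigma> y"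
  using add[of x "-y"] uminus[of y] K by (simp add: csf_uminus)

lemma inverse: "x \<in> K \<Longrightarrow> \<sigma> (inverse x) = inverse (\<sigma> x)"
proof (cases "x = 0")
  case False
  assume x: "x \<in> K"
  have "\<sigma> (x * inverse x) = 1" using False by simp
  then have "\<sigma> x * \<sigma> (inverse x) = 1" using x K by (simp add: mult csf_basic)
  then show ?thesis by (simp add: inverse_unique)
qed simp

lemma divide: "x \<in> K \<Longrightarrow> y \<in> K \<Longrightarrow> \<sigma> (x / y) = \<sigma> x / \<sigma> y"
  by (simp add: divide_inverse mult inverse csf_basic K)

lemma power: "x \<in> K \<Longrightarrow> \<sigma> (x ^ k) = \<sigma> x ^ k"
  by (induction k) (auto simp: mult csf_power K)

lemma poly_int: "x \<in> K \<Longrightarrow> \<sigma> (poly (map_poly of_int p) x) = poly (map_poly of_int p) (\<sigma> x)"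
  by (induction p) (auto simp: map_poly_pCons add mult csf_basic csf_of_int csf_poly_int K)

lemma poly_rat: "x \<in> K \<Longrightarrow> \<sigma> (poly (map_poly of_rat p) x) = poly (map_poly of_rat p) (\<sigma> x)"
  by (induction p) (auto simp: map_poly_pCons add mult csf_basic csf_of_rat csf_poly_rat K)

lemma croots: "croots p \<subseteq> K \<Longrightarrow> x \<in> croots p \<Longrightarrow> \<sigma> x \<in> croots p"
  using poly_int[of x p] by (auto simp: croots_def)

end

lemma aut_sf: "\<sigma> \<in> field_auts (splitting_field p) \<Longrightarrow> aut (splitting_field p) \<sigma>"
  by (simp add: aut_def sf_csubfield)

lemma aut_eqI:
  assumes "\<sigma> \<in> field_auts (splitting_field p)" "\<tau> \<in> field_auts (splitting_field p)"
    and "\<And>x. x \<in> croots p \<Longrightarrow> \<sigma> x = \<tau> x"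
  shows "\<sigma> = \<tau>"
proof -
  interpret s: aut "splitting_field p" \<sigma> by (rule aut_sf) fact
  interpret t: aut "splitting_field p" \<tau> by (rule aut_sf) fact
  let ?L = "splitting_field p"
  let ?E = "{x \<in> ?L. \<sigma> x = \<tau> x}"
  have L: "is_csubfield ?L" by (rule sf_csubfield)
  have "is_csubfield ?E"
    unfolding is_csubfield_def
  proof (intro conjI ballI impI)
    show "0 \<in> ?E" "1 \<in> ?E" using L by (simp_all add: csf_basic)
    fix x y assume x: "x \<in> ?E" and y: "y \<in> ?E"
    then have xL: "x \<in> ?L" and yL: "y \<in> ?L" and xe: "\<sigma> x = \<tau> x" and ye: "\<sigma> y = \<tau> y" by auto
    show "x + y \<in> ?E" using xL yL xe ye L by (simp add: s.add t.add csf_basic)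
    show "x - y \<in> ?E" using xL yL xe ye L by (simp add: s.diff t.diff csf_basic)
    show "x * y \<in> ?E" using xL yL xe ye L by (simp add: s.mult t.mult csf_basic)
  next
    fix x assume x: "x \<in> ?E"
    then have xL: "x \<in> ?L" and xe: "\<sigma> x = \<tau> x" by auto
    show "inverse x \<in> ?E" using xL xe L by (simp add: s.inverse t.inverse csf_basic)
  qed
  moreover have "croots p \<subseteq> ?E" using assms(3) sf_roots by auto
  ultimately have LE: "?L \<subseteq> ?E" by (rule sf_minimal)
  show ?thesis
  proof (rule ext)
    fix x show "\<sigma> x = \<tau> x"
    proof (cases "x \<in> ?L")
      case True then show ?thesis using LE by blast
    next
      case False then show ?thesis using s.ext t.ext by (simp add: extensional_def)
    qed
  qed
qed

lemma gal_carrier: "carrier (galois_group p) = field_auts (splitting_field p)"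
  and gal_mult: "\<sigma> \<otimes>\<^bsub>galois_group p\<^esub> \<tau> = restrict (\<sigma> \<circ> \<tau>) (splitting_field p)"
  and gal_one: "\<one>\<^bsub>galois_group p\<^esub> = restrict id (splitting_field p)"
  by (simp_all add: galois_group_def)

lemma comp_aut:
  assumes "\<sigma> \<in> field_auts (splitting_field p)" "\<tau> \<in> field_auts (splitting_field p)"
  shows "restrict (\<sigma> \<circ> \<tau>) (splitting_field p) \<in> field_auts (splitting_field p)"
proof -
  interpret s: aut "splitting_field p" \<sigma> by (rule aut_sf) fact
  interpret t: aut "splitting_field p" \<tau> by (rule aut_sf) fact
  let ?L = "splitting_field p"
  have "bij_betw (\<sigma> \<circ> \<tau>) ?L ?L" using s.bij t.bij by (rule bij_betw_trans[rotated])
  then have "bij_betw (restrict (\<sigma> \<circ> \<tau>) ?L) ?L ?L"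
    by (rule bij_betw_cong[THEN iffD1, rotated]) auto
  then show ?thesis
    using sf_csubfield[of p] csf_Rats[OF sf_csubfield[of p]]
    by (auto simp: field_auts_def s.add t.add s.mult t.mult t.inK csf_basic s.rat t.rat)
qed

lemma id_aut: "restrict id (splitting_field p) \<in> field_auts (splitting_field p)"
  using sf_csubfield[of p] by (auto simp: field_auts_def csf_basic bij_betw_def inj_on_def)

lemma inv_aut:
  assumes "\<sigma> \<in> field_auts (splitting_field p)"
  shows "restrict (inv_into (splitting_field p) \<sigma>) (splitting_field p) \<in> field_auts (splitting_field p)"
proof -
  interpret s: aut "splitting_field p" \<sigma> by (rule aut_sf) fact
  let ?L = "splitting_field p"
  let ?i = "inv_into ?L \<sigma>"
  have b: "bij_betw ?i ?L ?L" using s.bij by (rule bij_betw_inv_into)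
  have b': "bij_betw (restrict ?i ?L) ?L ?L" using b by (rule bij_betw_cong[THEN iffD1, rotated]) auto
  have iK: "x \<in> ?L \<Longrightarrow> ?i x \<in> ?L" for x using b by (auto simp: bij_betw_def)
  have si: "x \<in> ?L \<Longrightarrow> \<sigma> (?i x) = x" for x using s.bij by (meson bij_betw_inv_into_right)
  have hom: "?i (x + y) = ?i x + ?i y \<and> ?i (x * y) = ?i x * ?i y" if "x \<in> ?L" "y \<in> ?L" for x y
  proof -
    have "\<sigma> (?i x + ?i y) = x + y" "\<sigma> (?i x * ?i y) = x * y"
      using that by (simp_all add: s.add s.mult iK si)
    then show ?thesis using that
      by (metis csf_basic(3,5) iK s.inj sf_csubfield si)
  qed
  have rat: "q \<in> \<rat> \<Longrightarrow> q \<in> ?L \<Longrightarrow> ?i q = q" for q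
    by (metis iK s.inj s.rat si)
  show ?thesis using b' hom rat sf_csubfield[of p]
    by (auto simp: field_auts_def csf_basic)
qed

lemma group_gal: "group (galois_group p)"
proof (rule groupI)
  let ?L = "splitting_field p"
  let ?G = "galois_group p"
  show "x \<otimes>\<^bsub>?G\<^esub> y \<in> carrier ?G" if "x \<in> carrier ?G" "y \<in> carrier ?G" for x y
    using that comp_aut by (simp add: gal_carrier gal_mult)
  show "\<one>\<^bsub>?G\<^esub> \<in> carrier ?G" using id_aut by (simp add: gal_carrier gal_one)
  show "x \<otimes>\<^bsub>?G\<^esub> y \<otimes>\<^bsub>?G\<^esub> z = x \<otimes>\<^bsub>?G\<^esub> (y \<otimes>\<^bsub>?G\<^esub> z)"
    if "x \<in> carrier ?G" "y \<in> carrier ?G" "z \<in> carrier ?G" for x y z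
  proof -
    have zL: "t \<in> ?L \<Longrightarrow> z t \<in> ?L" for t
      using that(3) aut.inK[OF aut_sf, of z p] by (simp add: gal_carrier)
    show ?thesis unfolding gal_mult
      by (rule restrict_ext) (simp add: zL)
  qed
  show "\<one>\<^bsub>?G\<^esub> \<otimes>\<^bsub>?G\<^esub> x = x" if "x \<in> carrier ?G" for x
  proof -
    have xL: "t \<in> ?L \<Longrightarrow> x t \<in> ?L" for t
      using that aut.inK[OF aut_sf, of x p] by (simp add: gal_carrier)
    have ex: "x \<in> extensional ?L" using that aut.ext[OF aut_sf, of x p] by (simp add: gal_carrier)
    have "restrict (restrict id ?L \<circ> x) ?L = restrict x ?L"
      by (rule restrict_ext) (simp add: xL)
    also have "\<dots> = x" using ex by (rule extensional_restrict)
    finally show ?thesis unfolding gal_mult gal_one .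
  qed
  show "\<exists>y\<in>carrier ?G. y \<otimes>\<^bsub>?G\<^esub> x = \<one>\<^bsub>?G\<^esub>" if "x \<in> carrier ?G" for x
  proof (intro bexI)
    interpret s: aut ?L x using that by (simp add: gal_carrier aut_sf)
    show "restrict (inv_into ?L x) ?L \<in> carrier ?G"
      using that inv_aut by (simp add: gal_carrier)
    have inj: "inj_on x ?L" using s.bij by (simp add: bij_betw_def)
    show "restrict (inv_into ?L x) ?L \<otimes>\<^bsub>?G\<^esub> x = \<one>\<^bsub>?G\<^esub>"
      unfolding gal_mult gal_one
      by (rule restrict_ext) (simp add: s.inK inv_into_f_f[OF inj])
  qed
qed

lemma gal_pow:
  assumes "\<sigma> \<in> carrier (galois_group p)" "x \<in> splitting_field p"
  shows "(\<sigma> [^]\<^bsub>galois_group p\<^esub> (k::nat)) x = (\<sigma> ^^ k) x"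
  using assms(2)
proof (induction k arbitrary: x)
  case 0
  then show ?case by (simp add: gal_one)
next
  case (Suc k)
  interpret s: aut "splitting_field p" \<sigma> using assms(1) by (simp add: gal_carrier aut_sf)
  show ?case using Suc s.inK by (simp add: gal_mult funpow_Suc_right funpow_swap1)
qed

lemma funpow_inK:
  assumes "\<sigma> \<in> carrier (galois_group p)" "x \<in> splitting_field p"
  shows "(\<sigma> ^^ k) x \<in> splitting_field p"
  using assms(2) aut.inK[OF aut_sf, of \<sigma> p] assms(1)
  by (induction k) (auto simp: gal_carrier)



lemma exists_roots:
  fixes m n c :: int assumes c0: "c \<noteq> 0"
  obtains b1 b2 b3 :: complex where
   "of_int c = - ((b1*b2*b3)^2)" "of_int m = -(b1*b2+b1*b3+b2*b3)" "of_int n = b1*b2*b3*(b1+b2+b3)"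
proof -
  define e where "e = csqrt (- of_int c)"
  have e2: "e^2 = - of_int c" unfolding e_def by simp
  have e0: "e \<noteq> 0" using e2 c0 by auto
  define h where "h = [:e, - of_int m, of_int n / e, 1:]"
  have dh: "degree h = 3" and lh: "lead_coeff h = 1" by (simp_all add: h_def)
  obtain r where r: "smult (lead_coeff h) (\<Prod>i<degree h. [:-r i, 1:]) = h"
    by (rule complex_poly_decompose')
  have "(\<Prod>i<degree h. [:-r i, 1:]) = [:-r 0, 1:] * [:-r 1, 1:] * [:-r 2, 1:]"
    unfolding dh by (simp add: lessThan_Suc eval_nat_numeral mult_ac)
  also have "\<dots> = [: - (r 0 * r 1 * r 2), r 0 * r 1 + r 0 * r 2 + r 1 * r 2, - (r 0 + r 1 + r 2), 1:]"
    by (simp add: algebra_simps)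
  finally have "h = [: - (r 0 * r 1 * r 2), r 0 * r 1 + r 0 * r 2 + r 1 * r 2, - (r 0 + r 1 + r 2), 1:]"
    using r lh by simp
  then have "[:e, - of_int m, of_int n / e, 1:] = [: - (r 0 * r 1 * r 2), r 0 * r 1 + r 0 * r 2 + r 1 * r 2, - (r 0 + r 1 + r 2), 1:]"
    by (simp only: h_def)
  then have "e = - (r 0 * r 1 * r 2) \<and> - of_int m = r 0 * r 1 + r 0 * r 2 + r 1 * r 2
    \<and> of_int n / e = - (r 0 + r 1 + r 2)"
    by (simp only: pCons_eq_iff) blast
  then have h1: "e = - (r 0 * r 1 * r 2)" and h2: "- of_int m = r 0 * r 1 + r 0 * r 2 + r 1 * r 2"
    and h3: "of_int n / e = - (r 0 + r 1 + r 2)" by blast+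
  show ?thesis
  proof (rule that[of "r 0" "r 1" "r 2"])
    show "of_int c = - ((r 0 * r 1 * r 2)^2)" using e2 h1 by (simp add: power2_eq_square)
    show "of_int m = - (r 0 * r 1 + r 0 * r 2 + r 1 * r 2)" using arg_cong[OF h2, of uminus] by simp
    have "of_int n = e * (of_int n / e)" using e0 by simp
    also have "\<dots> = e * (- (r 0 + r 1 + r 2))" by (simp only: h3)
    also have "\<dots> = r 0 * r 1 * r 2 * (r 0 + r 1 + r 2)" by (simp only: h1) (simp add: algebra_simps)
    finally show "of_int n = r 0 * r 1 * r 2 * (r 0 + r 1 + r 2)" .
  qed
qed

locale cfg =
  fixes m n c :: int and b1 b2 b3 :: complex
  assumes c0: "c \<noteq> 0" and cdvd: "c dvd n^2"
   and vc: "of_int c = - ((b1*b2*b3)^2)" and vm: "of_int m = -(b1*b2+b1*b3+b2*b3)"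
   and vn: "of_int n = b1*b2*b3*(b1+b2+b3)"
begin

definition "f = [:c, 0, m ^ 2 - 2 * n, 0, n ^ 2 div c - 2 * m, 0, 1:]"
definition "g = [:c, m ^ 2 - 2 * n, n ^ 2 div c - 2 * m, 1:]"
definition "d = - (4 * m ^ 3 * c - m ^ 2 * n ^ 2 - 18 * m * n * c + 4 * n ^ 3 + 27 * c ^ 2)"
definition "a1 = b1^2"
definition "a2 = b2^2"
definition "a3 = b3^2"
definition "e = - (b1*b2*b3)"
definition "\<delta> = (a1-a2)*(a2-a3)*(a3-a1)"
abbreviation "L \<equiv> splitting_field f"

lemma bnz: "b1 \<noteq> 0" "b2 \<noteq> 0" "b3 \<noteq> 0"
  using c0 vc by auto

lemma e0: "e \<noteq> 0" using bnz by (simp add: e_def)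

lemma e2: "e^2 = - of_int c" using vc by (simp add: e_def power2_eq_square)

lemma N: "of_int (n^2 div c) = - ((b1+b2+b3)^2)"
proof -
  define X :: complex where "X = of_int (n^2 div c)"
  define P where "P = b1*b2*b3"
  define S where "S = b1+b2+b3"
  have "n^2 div c * c = n^2" using cdvd by simp
  then have "X * of_int c = (of_int n)^2" unfolding X_def
    by (metis of_int_mult of_int_power)
  then have h: "X * (- (P^2)) = (P * S)^2" using vc vn unfolding P_def S_def by simp
  have "(X + S^2) * P^2 = X * P^2 + (P * S)^2" by (simp add: algebra_simps power_mult_distrib)
  also have "\<dots> = X * P^2 + X * (- (P^2))" using h by simp
  also have "\<dots> = 0" by (simp add: algebra_simps)
  finally have "(X + S^2) * P^2 = 0" .
  moreover have "P^2 \<noteq> 0" using bnz by (simp add: P_def)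
  ultimately have "X + S^2 = 0" by simp
  then show ?thesis unfolding X_def S_def by (simp add: eq_neg_iff_add_eq_0)
qed

lemma poly_f: "poly (map_poly of_int f) z = (z^2-a1)*(z^2-a2)*(z^2-a3)"
proof -
  have "poly (map_poly of_int f) z = of_int c + z^2 * (of_int (m ^ 2 - 2 * n) + z^2 * (of_int (n ^ 2 div c - 2 * m) + z^2))"
    by (simp add: f_def map_poly_pCons algebra_simps power2_eq_square)
  also have "\<dots> = (z^2-a1)*(z^2-a2)*(z^2-a3)"
    unfolding of_int_diff of_int_mult of_int_power of_int_numeral N vc vm vn a1_def a2_def a3_def
    by algebra
  finally show ?thesis .
qed

lemma poly_g: "poly (map_poly of_int g) y = (y-a1)*(y-a2)*(y-a3)"
proof -
  have "poly (map_poly of_int g) y = of_int c + y * (of_int (m ^ 2 - 2 * n) + y * (of_int (n ^ 2 div c - 2 * m) + y))"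
    by (simp add: g_def map_poly_pCons algebra_simps)
  also have "\<dots> = (y-a1)*(y-a2)*(y-a3)"
    unfolding of_int_diff of_int_mult of_int_power of_int_numeral N vc vm vn a1_def a2_def a3_def
    by algebra
  finally show ?thesis .
qed

lemma croots_f: "croots f = {b1, -b1, b2, -b2, b3, -b3}"
proof -
  have "poly (map_poly of_int f) z = 0 \<longleftrightarrow> z \<in> {b1, -b1, b2, -b2, b3, -b3}" for z
  proof -
    have "(z^2 - b1^2) = (z - b1) * (z + b1)" "(z^2 - b2^2) = (z - b2) * (z + b2)"
      "(z^2 - b3^2) = (z - b3) * (z + b3)" by (simp_all add: algebra_simps power2_eq_square)
    then show ?thesis unfolding poly_f a1_def a2_def a3_def
      by (auto simp: eq_neg_iff_add_eq_0 add.commute)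
  qed
  then show ?thesis unfolding croots_def by auto
qed

lemma roots_g: "poly (map_poly of_int g) y = 0 \<longleftrightarrow> y = a1 \<or> y = a2 \<or> y = a3"
  unfolding poly_g by auto

lemma disc: "\<delta>^2 * (of_int c)^2 = of_int d * (of_int m * of_int n - of_int c)^2"
  unfolding d_def \<delta>_def of_int_diff of_int_mult of_int_power of_int_minus of_int_add of_int_numeral
    vc vm vn a1_def a2_def a3_def
  by algebra

lemma f_nz: "f \<noteq> 0" by (simp add: f_def)

lemma in_L: "b1 \<in> L" "b2 \<in> L" "b3 \<in> L" "e \<in> L" "a1 \<in> L" "a2 \<in> L" "a3 \<in> L" "\<delta> \<in> L"
proof -
  have K: "is_csubfield L" by (rule sf_csubfield)
  show b: "b1 \<in> L" "b2 \<in> L" "b3 \<in> L" using sf_roots[of f] croots_f by auto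
  show "e \<in> L" unfolding e_def using b K by (simp add: csf_basic csf_uminus)
  show a: "a1 \<in> L" "a2 \<in> L" "a3 \<in> L" unfolding a1_def a2_def a3_def using b K by (simp_all add: csf_power)
  show "\<delta> \<in> L" unfolding \<delta>_def using a K by (simp add: csf_basic)
qed

end


abbreviation rp :: "rat poly \<Rightarrow> complex \<Rightarrow> complex" where
  "rp q z \<equiv> poly (map_poly of_rat q) z"

lemma rmap_add: "map_poly (of_rat :: rat \<Rightarrow> complex) (p + q) = map_poly of_rat p + map_poly of_rat q"
  by (intro poly_eqI) (simp add: coeff_map_poly of_rat_add)

lemma rmap_diff: "map_poly (of_rat :: rat \<Rightarrow> complex) (p - q) = map_poly of_rat p - map_poly of_rat q"
  by (intro poly_eqI) (simp add: coeff_map_poly of_rat_diff)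


lemma rmap_pderiv: "map_poly (of_rat :: rat \<Rightarrow> complex) (pderiv p) = pderiv (map_poly of_rat p)"
  by (intro poly_eqI) (simp add: coeff_map_poly coeff_pderiv of_rat_mult of_rat_add)

lemma rp_add: "rp (p + q) z = rp p z + rp q z" by (simp add: rmap_add)
lemma rp_diff: "rp (p - q) z = rp p z - rp q z" by (simp add: rmap_diff)
lemma rp_pCons: "rp (pCons a p) z = of_rat a + z * rp p z"
  by (simp add: map_poly_pCons)

lemma rp_smult: "rp (smult a q) z = of_rat a * rp q z"
  by (induction q) (simp_all add: rp_pCons of_rat_mult algebra_simps)

lemma rp_mult: "rp (p * q) z = rp p z * rp q z"
  by (induction p) (simp_all add: rp_pCons rp_add rp_smult algebra_simps)
lemma rp_const: "rp [:r:] z = of_rat r" by (simp add: map_poly_pCons)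
lemma rp_1: "rp 1 z = 1" by simp

lemma rp_comp: "poly (map_poly of_int P) (rp q z) = rp (pcompose (map_poly of_int P) q) z"
  by (induction P) (simp_all add: map_poly_pCons pcompose_pCons rp_add rp_mult of_rat_add)

lemma irr_root_dvd:
  assumes irr: "irreducible p" and z: "rp p z = 0"
  shows "rp q z = 0 \<longleftrightarrow> p dvd q"
proof
  assume "p dvd q" then obtain k where "q = p * k" ..
  then show "rp q z = 0" using z by (simp add: rp_mult)
next
  assume q: "rp q z = 0"
  show "p dvd q"
  proof (rule ccontr)
    assume np: "\<not> p dvd q"
    have "gcd p q dvd p" by simp
    then have "p dvd gcd p q \<or> is_unit (gcd p q)" by (rule irreducibleD'[OF irr])
    then have "is_unit (gcd p q)" using np by (meson dvd_trans gcd_dvd2)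
    then have g1: "gcd p q = 1" by simp
    obtain u v where "bezout_coefficients p q = (u, v)" by (cases "bezout_coefficients p q")
    then have "u * p + v * q = 1" using bezout_coefficients g1 by metis
    then have "rp (u * p + v * q) z = 1" by simp
    then show False using z q by (simp add: rp_add rp_mult)
  qed
qed

lemma irr_deg_pos: "irreducible (p :: rat poly) \<Longrightarrow> degree p > 0"
  by (metis gr0I irreducible_def is_unit_iff_degree)

lemma irr_rsquarefree:
  assumes irr: "irreducible (p :: rat poly)"
  shows "rsquarefree (map_poly (of_rat :: rat \<Rightarrow> complex) p)"
  unfolding rsquarefree_roots
proof (intro allI notI)
  fix a assume a: "rp p a = 0 \<and> poly (pderiv (map_poly of_rat p)) a = 0"
  then have "rp (pderiv p) a = 0" by (simp add: rmap_pderiv)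
  then have dv: "p dvd pderiv p" using irr_root_dvd[OF irr] a by blast
  have dp: "degree p > 0" using irr by (rule irr_deg_pos)
  then have "pderiv p \<noteq> 0" by (simp add: pderiv_eq_0_iff)
  moreover have "p \<noteq> 0" using dp by auto
  ultimately have "degree p \<le> degree (pderiv p)" using dv dvd_imp_degree by blast
  then show False using dp by (simp add: degree_pderiv)
qed

lemma irr_card_roots:
  assumes irr: "irreducible (p :: rat poly)"
  shows "card {z. rp p z = 0} = degree p" "finite {z. rp p z = 0}"
proof -
  let ?P = "map_poly (of_rat :: rat \<Rightarrow> complex) p"
  have "p \<noteq> 0" using irr irr_deg_pos by fastforce
  then have nz: "?P \<noteq> 0" by (simp add: map_poly_eq_0_iff)
  show fin: "finite {z. rp p z = 0}" using nz by (rule poly_roots_finite)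
  let ?S = "{z. poly ?P z = 0}"
  let ?Q = "\<Prod>z\<in>?S. [:-z, 1:]"
  have eq: "smult (lead_coeff ?P) ?Q = ?P"
    by (rule complex_poly_decompose_rsquarefree[OF irr_rsquarefree[OF irr]])
  have lc: "lead_coeff ?P \<noteq> 0" using nz by simp
  have "degree (smult (lead_coeff ?P) ?Q) = degree ?Q" using lc by simp
  then have "degree ?P = degree ?Q" using eq by simp
  also have "\<dots> = (\<Sum>z\<in>?S. degree [:-z, 1:])"
    by (rule degree_prod_sum_eq) simp
  also have "\<dots> = (\<Sum>z\<in>?S. 1)" by simp
  also have "\<dots> = card {z. rp p z = 0}" by simp
  finally show "card {z. rp p z = 0} = degree p" by (simp add: degree_map_poly)
qed

locale alg =
  fixes \<theta> :: complex and p :: "rat poly"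
  assumes irr: "irreducible p" and root: "rp p \<theta> = 0"
begin
definition "Qt = range (\<lambda>q. rp q \<theta>)"

lemma Qt_rp: "rp q \<theta> \<in> Qt" by (simp add: Qt_def)

lemma Qt_field: "is_csubfield Qt"
  unfolding is_csubfield_def Qt_def
proof (intro conjI ballI impI)
  show "0 \<in> range (\<lambda>q. rp q \<theta>)" by (rule range_eqI[of _ _ 0]) simp
  show "1 \<in> range (\<lambda>q. rp q \<theta>)" by (rule range_eqI[of _ _ 1]) simp
  fix x y assume "x \<in> range (\<lambda>q. rp q \<theta>)" "y \<in> range (\<lambda>q. rp q \<theta>)"
  then obtain q1 q2 where x: "x = rp q1 \<theta>" and y: "y = rp q2 \<theta>" by blast
  show "x + y \<in> range (\<lambda>q. rp q \<theta>)" by (rule range_eqI[of _ _ "q1 + q2"]) (simp add: x y rp_add)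
  show "x - y \<in> range (\<lambda>q. rp q \<theta>)" by (rule range_eqI[of _ _ "q1 - q2"]) (simp add: x y rp_diff)
  show "x * y \<in> range (\<lambda>q. rp q \<theta>)" by (rule range_eqI[of _ _ "q1 * q2"]) (simp add: x y rp_mult)
next
  fix x assume "x \<in> range (\<lambda>q. rp q \<theta>)" and x0: "x \<noteq> 0"
  then obtain q where x: "x = rp q \<theta>" by blast
  have np: "\<not> p dvd q" using irr_root_dvd[OF irr root, of q] x x0 by simp
  have "gcd p q dvd p" by simp
  then have "p dvd gcd p q \<or> is_unit (gcd p q)" by (rule irreducibleD'[OF irr])
  then have "is_unit (gcd p q)" using np by (meson dvd_trans gcd_dvd2)
  then have g1: "gcd p q = 1" by simp
  obtain u v where "bezout_coefficients p q = (u, v)" by (cases "bezout_coefficients p q")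
  then have "u * p + v * q = 1" using bezout_coefficients g1 by metis
  then have "rp (u * p + v * q) \<theta> = 1" by simp
  then have "rp v \<theta> * x = 1" using root x by (simp add: rp_add rp_mult)
  then have "inverse x = rp v \<theta>" by (metis inverse_unique mult.commute)
  then show "inverse x \<in> range (\<lambda>q. rp q \<theta>)" by simp
qed

end

locale prim = alg \<theta> p for \<theta> p +
  fixes p0 :: "int poly"
  assumes p0nz: "p0 \<noteq> 0"
    and \<theta>L: "\<theta> \<in> splitting_field p0"
    and gen: "croots p0 \<subseteq> range (\<lambda>q. rp q \<theta>)"
begin

abbreviation "L \<equiv> splitting_field p0"

lemma L_eq: "L = Qt"
proof
  show "L \<subseteq> Qt" using Qt_field gen by (intro sf_minimal) (auto simp: Qt_def)
  show "Qt \<subseteq> L" using \<theta>L by (auto simp: Qt_def intro!: csf_poly_rat sf_csubfield)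
qed

lemma repr: "x \<in> L \<Longrightarrow> \<exists>q. x = rp q \<theta>"
  using L_eq by (auto simp: Qt_def)

lemma rp_in_L: "rp q \<theta> \<in> L"
  using L_eq by (auto simp: Qt_def)

definition "phi \<rho> x = (if x \<in> L then rp (SOME q. x = rp q \<theta>) \<rho> else undefined)"

context
  fixes \<rho> assumes r: "rp p \<rho> = 0"
begin

lemma phi_eval: "phi \<rho> (rp q \<theta>) = rp q \<rho>"
proof -
  define q' where "q' = (SOME q'. rp q \<theta> = rp q' \<theta>)"
  have "rp q \<theta> = rp q' \<theta>" unfolding q'_def by (rule someI) (rule refl)
  then have "rp (q' - q) \<theta> = 0" by (simp add: rp_diff)
  then have "p dvd (q' - q)" using irr_root_dvd[OF irr root] by blast
  then have "rp (q' - q) \<rho> = 0" using irr_root_dvd[OF irr r] by blast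
  then have "rp q' \<rho> = rp q \<rho>" by (simp add: rp_diff)
  then show ?thesis using rp_in_L by (simp add: phi_def q'_def)
qed

lemma phi_hom:
  assumes "x \<in> L" "y \<in> L"
  shows "phi \<rho> (x + y) = phi \<rho> x + phi \<rho> y" "phi \<rho> (x * y) = phi \<rho> x * phi \<rho> y"
proof -
  obtain q1 q2 where x: "x = rp q1 \<theta>" and y: "y = rp q2 \<theta>" using assms repr by blast
  have "phi \<rho> (x + y) = phi \<rho> (rp (q1 + q2) \<theta>)" by (simp add: x y rp_add)
  also have "\<dots> = rp (q1 + q2) \<rho>" by (rule phi_eval)
  finally show "phi \<rho> (x + y) = phi \<rho> x + phi \<rho> y" by (simp add: x y phi_eval rp_add)
  have "phi \<rho> (x * y) = phi \<rho> (rp (q1 * q2) \<theta>)" by (simp add: x y rp_mult)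
  also have "\<dots> = rp (q1 * q2) \<rho>" by (rule phi_eval)
  finally show "phi \<rho> (x * y) = phi \<rho> x * phi \<rho> y" by (simp add: x y phi_eval rp_mult)
qed

lemma phi_diff:
  assumes "x \<in> L" "y \<in> L"
  shows "phi \<rho> (x - y) = phi \<rho> x - phi \<rho> y"
proof -
  obtain q1 q2 where x: "x = rp q1 \<theta>" and y: "y = rp q2 \<theta>" using assms repr by blast
  have "phi \<rho> (x - y) = phi \<rho> (rp (q1 - q2) \<theta>)" by (simp add: x y rp_diff)
  also have "\<dots> = rp (q1 - q2) \<rho>" by (rule phi_eval)
  finally show ?thesis by (simp add: x y phi_eval rp_diff)
qed

lemma phi_rat: "phi \<rho> (of_rat a) = of_rat a"
  using phi_eval[of "[:a:]"] by (simp add: rp_const)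

lemma phi_inj: "inj_on (phi \<rho>) L"
proof
  fix x y assume "x \<in> L" "y \<in> L" and eq: "phi \<rho> x = phi \<rho> y"
  obtain q1 q2 where x: "x = rp q1 \<theta>" and y: "y = rp q2 \<theta>" using \<open>x \<in> L\<close> \<open>y \<in> L\<close> repr by blast
  have "rp (q1 - q2) \<rho> = 0" using eq by (simp add: x y phi_eval rp_diff)
  then have "p dvd (q1 - q2)" using irr_root_dvd[OF irr r] by blast
  then have "rp (q1 - q2) \<theta> = 0" using irr_root_dvd[OF irr root] by blast
  then show "x = y" by (simp add: x y rp_diff)
qed

lemma phi_inverse: "x \<in> L \<Longrightarrow> phi \<rho> (inverse x) = inverse (phi \<rho> x)"
proof (cases "x = 0")
  case True
  then show ?thesis using phi_rat[of 0] by simp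
next
  case False
  assume x: "x \<in> L"
  have K: "is_csubfield L" by (rule sf_csubfield)
  have "phi \<rho> (x * inverse x) = 1" using False phi_rat[of 1] by simp
  then have "phi \<rho> x * phi \<rho> (inverse x) = 1" using x K by (simp add: phi_hom csf_basic)
  then show ?thesis by (simp add: inverse_unique)
qed

lemma phi_roots: "x \<in> croots p0 \<Longrightarrow> phi \<rho> x \<in> croots p0"
proof -
  assume x: "x \<in> croots p0"
  then have "x \<in> L" using sf_roots by blast
  then obtain q where q: "x = rp q \<theta>" using repr by blast
  have "poly (map_poly of_int p0) (rp q \<theta>) = 0" using x q by (simp add: croots_def)
  then have "rp (pcompose (map_poly of_int p0) q) \<theta> = 0" by (simp add: rp_comp)
  then have "p dvd pcompose (map_poly of_int p0) q" using irr_root_dvd[OF irr root] by blast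
  then have "rp (pcompose (map_poly of_int p0) q) \<rho> = 0" using irr_root_dvd[OF irr r] by blast
  then have "poly (map_poly of_int p0) (rp q \<rho>) = 0" by (simp add: rp_comp)
  then show ?thesis by (simp add: croots_def q phi_eval)
qed

lemma croots_finite: "finite (croots p0)"
proof -
  have "map_poly (of_int :: int \<Rightarrow> complex) p0 \<noteq> 0" using p0nz by (simp add: map_poly_eq_0_iff)
  then show ?thesis unfolding croots_def by (rule poly_roots_finite)
qed

lemma phi_croots_eq: "phi \<rho> ` croots p0 = croots p0"
proof (rule endo_inj_surj)
  show "finite (croots p0)" by (rule croots_finite)
  show "phi \<rho> ` croots p0 \<subseteq> croots p0" using phi_roots by blast
  show "inj_on (phi \<rho>) (croots p0)" using phi_inj sf_roots inj_on_subset by blast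
qed

lemma phi_aut: "phi \<rho> \<in> field_auts L"
proof -
  have K: "is_csubfield L" by (rule sf_csubfield)
  have ratL: "q \<in> \<rat> \<Longrightarrow> phi \<rho> q = q" for q by (auto elim!: Rats_cases simp: phi_rat)
  let ?E = "{x \<in> L. phi \<rho> x \<in> L}"
  have "is_csubfield ?E"
    unfolding is_csubfield_def
  proof (intro conjI ballI impI)
    show "0 \<in> ?E" "1 \<in> ?E" using K ratL[of 0] ratL[of 1] by (simp_all add: csf_basic)
    fix x y assume x: "x \<in> ?E" and y: "y \<in> ?E"
    show "x + y \<in> ?E" "x * y \<in> ?E" using x y K by (simp_all add: phi_hom csf_basic)
    show "x - y \<in> ?E" using x y K by (simp add: phi_diff csf_basic)
  next
    fix x assume x: "x \<in> ?E"
    show "inverse x \<in> ?E" using x K by (simp add: phi_inverse csf_basic)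
  qed
  moreover have "croots p0 \<subseteq> ?E" using sf_roots phi_roots by blast
  ultimately have LE: "L \<subseteq> ?E" by (rule sf_minimal)
  have "is_csubfield (phi \<rho> ` L)"
    unfolding is_csubfield_def
  proof (intro conjI ballI impI)
    show "0 \<in> phi \<rho> ` L" using K ratL[of 0] by (metis csf_basic(1) Rats_0 image_eqI)
    show "1 \<in> phi \<rho> ` L" using K ratL[of 1] by (metis csf_basic(2) Rats_1 image_eqI)
    fix x y assume "x \<in> phi \<rho> ` L" "y \<in> phi \<rho> ` L"
    then obtain u v where u: "u \<in> L" "x = phi \<rho> u" and v: "v \<in> L" "y = phi \<rho> v" by blast
    show "x + y \<in> phi \<rho> ` L" using u v K by (metis phi_hom(1) csf_basic(3) image_eqI)
    show "x * y \<in> phi \<rho> ` L" using u v K by (metis phi_hom(2) csf_basic(5) image_eqI)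
    show "x - y \<in> phi \<rho> ` L" using u v K by (metis phi_diff csf_basic(4) image_eqI)
  next
    fix x assume "x \<in> phi \<rho> ` L"
    then obtain u where u: "u \<in> L" "x = phi \<rho> u" by blast
    show "inverse x \<in> phi \<rho> ` L" using u K by (metis phi_inverse csf_basic(6) image_eqI)
  qed
  moreover have "croots p0 \<subseteq> phi \<rho> ` L" using phi_croots_eq sf_roots by blast
  ultimately have "L \<subseteq> phi \<rho> ` L" by (rule sf_minimal)
  with LE have im: "phi \<rho> ` L = L" by blast
  have "bij_betw (phi \<rho>) L L" using phi_inj im by (simp add: bij_betw_def)
  moreover have "phi \<rho> \<in> extensional L" by (simp add: phi_def extensional_def)
  ultimately show ?thesis using ratL by (auto simp: field_auts_def phi_hom)
qed

end

lemma fixed_rat: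
  assumes x: "x \<in> L" and fx: "\<And>\<sigma>. \<sigma> \<in> field_auts L \<Longrightarrow> \<sigma> x = x"
  shows "x \<in> \<rat>"
proof -
  obtain q where q: "x = rp q \<theta>" using x repr by blast
  define r where "r = q mod p"
  have "q = p * (q div p) + r" by (simp add: r_def)
  then have xr: "x = rp r \<theta>" using q root by (metis add_0 mult_zero_left rp_add rp_mult)
  have "rp r \<rho> = x" if "rp p \<rho> = 0" for \<rho>
  proof -
    have "phi \<rho> x = x" using fx phi_aut[OF that] by blast
    then show ?thesis using phi_eval[OF that] xr by simp
  qed
  define R where "R = map_poly (of_rat :: rat \<Rightarrow> complex) r - [:x:]"
  have sub: "{z. rp p z = 0} \<subseteq> {z. poly R z = 0}"
    using \<open>\<And>\<rho>. rp p \<rho> = 0 \<Longrightarrow> rp r \<rho> = x\<close> by (auto simp: R_def)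
  have dp: "degree p > 0" using irr by (rule irr_deg_pos)
  have p0: "p \<noteq> 0" using dp by auto
  have dr: "degree r < degree p \<or> r = 0" unfolding r_def
    using degree_mod_less'[OF p0, of q] by blast
  have dR: "degree R < degree p"
  proof -
    have "degree R \<le> max (degree (map_poly (of_rat :: rat \<Rightarrow> complex) r)) (degree [:x:])"
      unfolding R_def by (rule degree_diff_le_max)
    then show ?thesis using dr dp by (auto simp: degree_map_poly)
  qed
  have "R = 0"
  proof (rule ccontr)
    assume "R \<noteq> 0"
    then have "card {z. poly R z = 0} \<le> degree R" by (rule card_poly_roots_bound)
    moreover have "card {z. rp p z = 0} \<le> card {z. poly R z = 0}"
      using sub \<open>R \<noteq> 0\<close> by (intro card_mono poly_roots_finite) auto
    ultimately show False using irr_card_roots[OF irr] dR by simp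
  qed
  then have "map_poly (of_rat :: rat \<Rightarrow> complex) r = [:x:]" by (simp add: R_def)
  then have "coeff (map_poly (of_rat :: rat \<Rightarrow> complex) r) 0 = x" by (metis coeff_pCons_0)
  then have "x = of_rat (coeff r 0)" by (simp add: coeff_map_poly)
  then show ?thesis by simp
qed

end


lemma rat_sq_int:
  fixes z :: int and x :: complex
  assumes "x \<in> \<rat>" "x^2 = of_int z"
  shows "\<exists>k. z = k^2"
proof -
  obtain r where r: "x = of_rat r" using assms(1) Rats_cases by blast
  have "of_rat (r^2) = (of_rat (of_int z) :: complex)" using assms(2) r by (simp add: of_rat_power)
  then have r2: "r^2 = of_int z" by (simp only: of_rat_eq_iff)
  obtain a b where q: "quotient_of r = (a, b)" by (cases "quotient_of r")
  have b0: "b > 0" using q quotient_of_denom_pos by blast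
  have cop: "coprime a b" using q quotient_of_coprime by blast
  have rab: "r = of_int a / of_int b" using q quotient_of_div by blast
  have "(of_int a / of_int b)^2 = (of_int z :: rat)" using r2 rab by simp
  then have h: "(of_int a)^2 / (of_int b)^2 = (of_int z :: rat)" by (simp only: power_divide)
  have bz: "(of_int b :: rat)^2 \<noteq> 0" using b0 by simp
  have "of_int a ^ 2 = (of_int z * of_int b ^ 2 :: rat)"
    using h nonzero_divide_eq_eq[OF bz] by blast
  then have "of_int (a^2) = (of_int (z * b^2) :: rat)" by simp
  then have ab: "a^2 = z * b^2" by (simp only: of_int_eq_iff)
  have "b dvd a^2" using ab by simp
  moreover have "coprime b (a^2)" using cop by (simp add: coprime_commute)
  ultimately have "is_unit b" using coprime_common_divisor[of b "a^2" b] by simp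
  then have "b = 1" using b0 by (simp add: zdvd1_eq)
  then show ?thesis using ab by (intro exI[of _ a]) simp
qed

lemma perm3_fix1:
  assumes I: "\<And>a b. a \<in> S \<Longrightarrow> b \<in> S \<Longrightarrow> s a = s b \<Longrightarrow> a = b"
    and S: "x \<in> S" "y \<in> S" "z \<in> S"
    and im: "s y \<in> {x,y,z}" "s z \<in> {x,y,z}" and fx: "s x = x"
  shows "s (s y) = y"
proof -
  consider "s y = x" | "s y = y" | "s y = z" using im(1) by blast
  then show ?thesis
  proof cases
    case 1
    then have "y = x" using I[of y x] S fx by simp
    then show ?thesis using fx by simp
  next
    case 2 then show ?thesis by simp
  next
    case 3
    consider "s z = x" | "s z = y" | "s z = z" using im(2) by blast
    then show ?thesis
    proof cases
      case 1
      then have "z = x" using I[of z x] S fx by simp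
      then have "s y = s x" using 3 fx by simp
      then have "y = x" using I[of y x] S by simp
      then show ?thesis using fx by simp
    next
      case 2 then show ?thesis using 3 by simp
    next
      case c: 3
      then have "s z = s y" using 3 by simp
      then have "z = y" using I[of z y] S by simp
      then show ?thesis using c by simp
    qed
  qed
qed

lemma perm3_fix:
  assumes "inj_on s S" "x \<in> S" "y \<in> S" "z \<in> S"
    "s x \<in> {x,y,z}" "s y \<in> {x,y,z}" "s z \<in> {x,y,z}" "s x = x"
  shows "s (s y) = y \<and> s (s z) = z"
proof -
  have I: "\<And>a b. a \<in> S \<Longrightarrow> b \<in> S \<Longrightarrow> s a = s b \<Longrightarrow> a = b"
    using assms(1) by (auto simp: inj_on_def)
  have "s (s y) = y" by (rule perm3_fix1[OF I assms(2-4) assms(6,7,8)])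
  moreover have "s (s z) = z" by (rule perm3_fix1[OF I assms(2,4,3)]) (use assms(6-8) in auto)
  ultimately show ?thesis by blast
qed

lemma perm3_cycle1:
  assumes I: "\<And>a b. a \<in> S \<Longrightarrow> b \<in> S \<Longrightarrow> s a = s b \<Longrightarrow> a = b"
    and S: "x \<in> S" "y \<in> S" "z \<in> S" and d: "x \<noteq> y" "x \<noteq> z" "y \<noteq> z"
    and im: "s y \<in> {x,y,z}" "s z \<in> {x,y,z}" and nf: "s y \<noteq> y" "s z \<noteq> z"
    and sx: "s x = y"
  shows "s y = z \<and> s z = x"
proof -
  have "s y \<noteq> y" by (rule nf(1))
  moreover have "s y \<noteq> x"
  proof
    assume sy: "s y = x"
    consider "s z = x" | "s z = y" using im(2) nf(2) by blast
    then show False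
    proof cases
      case 1 then show False using I[of z y] S d sy by simp
    next
      case 2 then show False using I[of z x] S d sx by simp
    qed
  qed
  ultimately have sy: "s y = z" using im(1) by blast
  have "s z \<noteq> y" using I[of z x] S d sx by auto
  then have "s z = x" using im(2) nf(2) by blast
  with sy show ?thesis by blast
qed

lemma perm3_cycle:
  assumes "inj_on s S" "x \<in> S" "y \<in> S" "z \<in> S" "x \<noteq> y" "x \<noteq> z" "y \<noteq> z"
    "s x \<in> {x,y,z}" "s y \<in> {x,y,z}" "s z \<in> {x,y,z}" "s x \<noteq> x" "s y \<noteq> y" "s z \<noteq> z"
  shows "(s x = y \<and> s y = z \<and> s z = x) \<or> (s x = z \<and> s y = x \<and> s z = y)"
proof -
  have I: "\<And>a b. a \<in> S \<Longrightarrow> b \<in> S \<Longrightarrow> s a = s b \<Longrightarrow> a = b"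
    using assms(1) by (auto simp: inj_on_def)
  consider "s x = y" | "s x = z" using assms(8,11) by blast
  then show ?thesis
  proof cases
    case 1
    have "s y = z \<and> s z = x"
      by (rule perm3_cycle1[OF I assms(2-4) assms(5-7) assms(9,10) assms(12,13) 1])
    then show ?thesis using 1 by blast
  next
    case 2
    have "s z = y \<and> s y = x"
      by (rule perm3_cycle1[OF I assms(2,4,3)]) (use assms 2 in auto)
    then show ?thesis using 2 by blast
  qed
qed

lemma rp_of_rat: "rp q (of_rat r) = of_rat (poly q r)"
  by (induction q) (simp_all add: rp_pCons of_rat_add of_rat_mult)

lemma cubic_distinct:
  fixes x y z :: complex
  assumes G: "G = [:-x,1:] * [:-y,1:] * [:-z,1:]" and sq: "rsquarefree G"
  shows "x \<noteq> y" "x \<noteq> z" "y \<noteq> z"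
proof -
  have nd: "\<not> (poly G w = 0 \<and> poly (pderiv G) w = 0)" for w using sq by (simp add: rsquarefree_roots)
  show "x \<noteq> y" using nd[of x] by (auto simp: G pderiv_mult pderiv_pCons algebra_simps)
  show "x \<noteq> z" using nd[of x] by (auto simp: G pderiv_mult pderiv_pCons algebra_simps)
  show "y \<noteq> z" using nd[of y] by (auto simp: G pderiv_mult pderiv_pCons algebra_simps)
qed

context cfg
begin

abbreviation "G \<equiv> galois_group f"
abbreviation "gQ \<equiv> map_poly (of_int :: int \<Rightarrow> rat) g"

lemma rp_gQ: "rp gQ z = poly (map_poly of_int g) z"
proof -
  have "map_poly (of_rat :: rat \<Rightarrow> complex) gQ = map_poly (of_rat \<circ> of_int) g"
    by (simp add: map_poly_map_poly)
  also have "(of_rat \<circ> of_int :: int \<Rightarrow> complex) = of_int" by (simp add: fun_eq_iff)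
  finally show ?thesis by simp
qed

lemma G_factored: "map_poly (of_int :: int \<Rightarrow> complex) g = [:-a1,1:] * [:-a2,1:] * [:-a3,1:]"
proof -
  have "poly (map_poly (of_int :: int \<Rightarrow> complex) g) = poly ([:-a1,1:] * [:-a2,1:] * [:-a3,1:])"
    by (simp add: fun_eq_iff poly_g algebra_simps)
  then show ?thesis by (simp only: poly_eq_poly_eq_iff)
qed

lemma degree_gQ: "degree gQ = 3"
  by (simp add: g_def degree_map_poly)

lemma irr_distinct:
  assumes irr: "irreducible gQ"
  shows "a1 \<noteq> a2" "a1 \<noteq> a3" "a2 \<noteq> a3"
proof -
  have "map_poly (of_rat :: rat \<Rightarrow> complex) gQ = map_poly of_int g"
    by (simp add: map_poly_map_poly o_def)
  then have sq: "rsquarefree (map_poly (of_int :: int \<Rightarrow> complex) g)"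
    using irr_rsquarefree[OF irr] by simp
  show "a1 \<noteq> a2" "a1 \<noteq> a3" "a2 \<noteq> a3" using cubic_distinct[OF G_factored sq] by auto
qed

lemma irr_not_rat:
  assumes irr: "irreducible gQ" and "a \<in> {a1,a2,a3}"
  shows "a \<notin> \<rat>"
proof
  assume "a \<in> \<rat>"
  then obtain r where r: "a = of_rat r" using Rats_cases by blast
  have "poly (map_poly of_int g) a = 0" using assms(2) roots_g by auto
  then have "of_rat (poly gQ r) = (0 :: complex)" using r rp_gQ rp_of_rat by metis
  then have "poly gQ r = 0" by simp
  then have "[:-r,1:] dvd gQ" by (simp add: poly_eq_0_iff_dvd)
  then obtain k where k: "gQ = [:-r,1:] * k" by blast
  have "gQ \<noteq> 0" using degree_gQ by auto
  then have k0: "k \<noteq> 0" using k by auto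
  have "is_unit [:-r,1:] \<or> is_unit k" by (rule irreducibleD[OF irr k])
  moreover have "\<not> is_unit [:-r,1:]" by (simp add: is_unit_iff_degree)
  moreover have l0: "[:-r,1:] \<noteq> (0 :: rat poly)" by simp
  have "degree ([:-r,1:] * k) = degree [:-r,1:] + degree k" by (rule degree_mult_eq[OF l0 k0])
  then have "degree k = 2" using k degree_gQ by simp
  then have "\<not> is_unit k" using k0 by (simp add: is_unit_iff_degree)
  ultimately show False by blast
qed

lemma deg1_root:
  fixes a :: "rat poly"
  assumes "degree a = 1"
  shows "\<exists>r. poly a r = 0"
proof -
  have "a \<noteq> 0" using assms by auto
  then have "lead_coeff a \<noteq> 0" by simp
  then have c1: "coeff a 1 \<noteq> 0" using assms by simp
  have "poly a x = coeff a 0 + coeff a 1 * x" for x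
    using assms by (simp add: poly_altdef)
  then have "poly a (- coeff a 0 / coeff a 1) = 0" using c1 by simp
  then show ?thesis by blast
qed

lemma not_irr_rat_root:
  assumes nirr: "\<not> irreducible gQ"
  shows "\<exists>a\<in>{a1,a2,a3}. a \<in> \<rat>"
proof -
  have g0: "gQ \<noteq> 0" using degree_gQ by auto
  have gu: "\<not> is_unit gQ" using g0 degree_gQ by (simp add: is_unit_iff_degree)
  have "\<exists>u v. gQ = u * v \<and> \<not> is_unit u \<and> \<not> is_unit v"
    using nirr g0 gu by (simp add: irreducible_def)
  then obtain u v where uv: "gQ = u * v" "\<not> is_unit u" "\<not> is_unit v" by blast
  have u0: "u \<noteq> 0" and v0: "v \<noteq> 0" using uv g0 by auto
  have du: "degree u > 0" using uv(2) u0 by (simp add: is_unit_iff_degree)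
  have dv: "degree v > 0" using uv(3) v0 by (simp add: is_unit_iff_degree)
  have "degree u + degree v = 3" using uv(1) u0 v0 degree_gQ by (simp add: degree_mult_eq)
  then have "degree u = 1 \<or> degree v = 1" using du dv by linarith
  then obtain r where "poly u r = 0 \<or> poly v r = 0" using deg1_root by blast
  then have "poly gQ r = 0" using uv(1) by auto
  then have "rp gQ (of_rat r) = 0" by (simp add: rp_of_rat)
  then have "poly (map_poly (of_int :: int \<Rightarrow> complex) g) (of_rat r) = 0" by (simp only: rp_gQ)
  then have "of_rat r \<in> {a1,a2,a3}" using roots_g by auto
  moreover have "(of_rat r :: complex) \<in> \<rat>" by simp
  ultimately show ?thesis by blast
qed

end


lemma neg_self_c: "(- w = (w::complex)) \<longleftrightarrow> w = 0"
proof
  assume "- w = w"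
  then have "2 * w = 0" by (metis add_eq_0_iff mult_2 neg_eq_iff_add_eq_0)
  then show "w = 0" by simp
qed simp

context cfg
begin

lemma L_field: "is_csubfield L" by (rule sf_csubfield)

lemma roots_nz: "x \<in> croots f \<Longrightarrow> x \<noteq> 0" using croots_f bnz by auto

lemma img_root: "\<sigma> \<in> field_auts L \<Longrightarrow> x \<in> croots f \<Longrightarrow> \<sigma> x \<in> croots f"
  using aut.croots[OF aut_sf sf_roots] by blast

lemma img_a:
  assumes s: "\<sigma> \<in> field_auts L"
  shows "\<sigma> a1 \<in> {a1,a2,a3}" "\<sigma> a2 \<in> {a1,a2,a3}" "\<sigma> a3 \<in> {a1,a2,a3}"
proof -
  interpret s: aut L \<sigma> by (rule aut_sf[OF s])
  have sq: "\<sigma> (x^2) \<in> {a1,a2,a3}" if "x \<in> croots f" for x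
  proof -
    have "x \<in> L" using that sf_roots by blast
    then have "\<sigma> (x^2) = (\<sigma> x)^2" by (rule s.power)
    moreover have "\<sigma> x \<in> {b1, -b1, b2, -b2, b3, -b3}" using img_root[OF s that] croots_f by simp
    ultimately show ?thesis by (auto simp: a1_def a2_def a3_def)
  qed
  show "\<sigma> a1 \<in> {a1,a2,a3}" "\<sigma> a2 \<in> {a1,a2,a3}" "\<sigma> a3 \<in> {a1,a2,a3}"
    using sq[of b1] sq[of b2] sq[of b3] croots_f by (auto simp: a1_def a2_def a3_def)
qed

lemma img_e:
  assumes s: "\<sigma> \<in> field_auts L"
  shows "\<sigma> e = e \<or> \<sigma> e = - e"
proof -
  interpret s: aut L \<sigma> by (rule aut_sf[OF s])
  have "(\<sigma> e)^2 = \<sigma> (e^2)" using in_L by (simp add: s.power)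
  also have "\<dots> = \<sigma> (- of_int c)" by (simp add: e2)
  also have "\<dots> = e^2" by (simp add: e2 s.uminus L_field csf_of_int)
  finally show ?thesis by (simp add: power2_eq_iff)
qed

lemma img_delta:
  assumes s: "\<sigma> \<in> field_auts L"
  shows "\<sigma> \<delta> = (\<sigma> a1 - \<sigma> a2) * (\<sigma> a2 - \<sigma> a3) * (\<sigma> a3 - \<sigma> a1)"
proof -
  interpret s: aut L \<sigma> by (rule aut_sf[OF s])
  show ?thesis unfolding \<delta>_def using in_L L_field by (simp add: s.mult s.diff csf_basic)
qed

lemma fix_a_pm:
  assumes s: "\<sigma> \<in> field_auts L" and fa: "\<sigma> a1 = a1" "\<sigma> a2 = a2" "\<sigma> a3 = a3"
    and x: "x \<in> croots f"
  shows "\<sigma> x = x \<or> \<sigma> x = - x"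
proof -
  interpret s: aut L \<sigma> by (rule aut_sf[OF s])
  have pm: "\<sigma> b = b \<or> \<sigma> b = - b" if "b \<in> L" "\<sigma> (b^2) = b^2" for b
  proof -
    have "(\<sigma> b)^2 = b^2" using that by (simp add: s.power)
    then show ?thesis by (simp add: power2_eq_iff)
  qed
  have p1: "\<sigma> b1 = b1 \<or> \<sigma> b1 = - b1" using pm[of b1] in_L fa by (simp add: a1_def)
  have p2: "\<sigma> b2 = b2 \<or> \<sigma> b2 = - b2" using pm[of b2] in_L fa by (simp add: a2_def)
  have p3: "\<sigma> b3 = b3 \<or> \<sigma> b3 = - b3" using pm[of b3] in_L fa by (simp add: a3_def)
  have "x \<in> {b1, -b1, b2, -b2, b3, -b3}" using x croots_f by simp
  then show ?thesis using p1 p2 p3 in_L by (auto simp: s.uminus)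
qed

lemma one_G: "\<one>\<^bsub>G\<^esub> = restrict id L" by (simp add: gal_one)

lemma id_of_roots:
  assumes s: "\<sigma> \<in> field_auts L" and fx: "\<And>x. x \<in> croots f \<Longrightarrow> \<sigma> x = x"
  shows "\<sigma> = \<one>\<^bsub>G\<^esub>"
  unfolding one_G using sf_roots fx by (intro aut_eqI[OF s id_aut]) auto

lemma order6_no_fix:
  assumes sG: "\<sigma> \<in> carrier G" and s2: "\<sigma> [^]\<^bsub>G\<^esub> (2::nat) \<noteq> \<one>\<^bsub>G\<^esub>"
    and s6: "\<sigma> [^]\<^bsub>G\<^esub> (6::nat) = \<one>\<^bsub>G\<^esub>"
    and fx: "\<sigma> a1 = a1 \<or> \<sigma> a2 = a2 \<or> \<sigma> a3 = a3"
  shows False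
proof -
  interpret grp: group G by (rule group_gal)
  have s: "\<sigma> \<in> field_auts L" using sG by (simp add: gal_carrier)
  interpret s: aut L \<sigma> by (rule aut_sf[OF s])
  have inj: "inj_on \<sigma> L" using s.bij by (simp add: bij_betw_def)
  note im = img_a[OF s]
  have ss: "\<sigma> (\<sigma> a1) = a1 \<and> \<sigma> (\<sigma> a2) = a2 \<and> \<sigma> (\<sigma> a3) = a3"
  proof -
    consider "\<sigma> a1 = a1" | "\<sigma> a2 = a2" | "\<sigma> a3 = a3" using fx by blast
    then show ?thesis
    proof cases
      case 1
      have "\<sigma> (\<sigma> a2) = a2 \<and> \<sigma> (\<sigma> a3) = a3"
        by (rule perm3_fix[OF inj in_L(5,6,7) im 1])
      then show ?thesis using 1 by simp
    next
      case 2
      have "\<sigma> (\<sigma> a1) = a1 \<and> \<sigma> (\<sigma> a3) = a3"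
        by (rule perm3_fix[OF inj in_L(6,5,7)]) (use im 2 in auto)
      then show ?thesis using 2 by simp
    next
      case 3
      have "\<sigma> (\<sigma> a1) = a1 \<and> \<sigma> (\<sigma> a2) = a2"
        by (rule perm3_fix[OF inj in_L(7,5,6)]) (use im 3 in auto)
      then show ?thesis using 3 by simp
    qed
  qed
  define \<tau> where "\<tau> = \<sigma> [^]\<^bsub>G\<^esub> (2::nat)"
  have tG: "\<tau> \<in> carrier G" unfolding \<tau>_def using sG by simp
  have t: "\<tau> \<in> field_auts L" using tG by (simp add: gal_carrier)
  interpret t: aut L \<tau> by (rule aut_sf[OF t])
  have tx: "\<tau> x = \<sigma> (\<sigma> x)" if "x \<in> L" for x
    unfolding \<tau>_def using gal_pow[OF sG that, of 2] by (simp add: numeral_2_eq_2)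
  have ta: "\<tau> a1 = a1" "\<tau> a2 = a2" "\<tau> a3 = a3" using ss tx in_L by auto
  have t3: "\<tau> [^]\<^bsub>G\<^esub> (3::nat) = \<one>\<^bsub>G\<^esub>"
    unfolding \<tau>_def using sG s6 by (simp add: grp.nat_pow_pow)
  have "\<tau> x = x" if x: "x \<in> croots f" for x
  proof (rule ccontr)
    assume nx: "\<tau> x \<noteq> x"
    then have mx: "\<tau> x = - x" using fix_a_pm[OF t ta x] by blast
    have xL: "x \<in> L" using x sf_roots by blast
    have "(\<tau> [^]\<^bsub>G\<^esub> (3::nat)) x = (\<tau> ^^ 3) x" by (rule gal_pow[OF tG xL])
    also have "\<dots> = \<tau> (\<tau> (\<tau> x))" by (simp add: eval_nat_numeral)
    also have "\<tau> (\<tau> x) = x" using mx xL by (simp add: t.uminus)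
    finally have "(\<tau> [^]\<^bsub>G\<^esub> (3::nat)) x = - x" using mx by simp
    then have "x = - x" using t3 xL by (simp add: one_G)
    then show False using roots_nz[OF x] neg_self_c[of x] by simp
  qed
  then have "\<tau> = \<one>\<^bsub>G\<^esub>" by (rule id_of_roots[OF t])
  then show False using s2 by (simp add: \<tau>_def)
qed

lemma fix_e_a_id:
  assumes s: "\<sigma> \<in> field_auts L" and d: "a1 \<noteq> a2" "a1 \<noteq> a3" "a2 \<noteq> a3"
    and fe: "\<sigma> e = e" and fa: "\<sigma> a1 = a1" "\<sigma> a2 = a2" "\<sigma> a3 = a3"
  shows "\<sigma> = \<one>\<^bsub>G\<^esub>"
proof -
  interpret s: aut L \<sigma> by (rule aut_sf[OF s])
  have rb: "b1 \<in> croots f" "b2 \<in> croots f" "b3 \<in> croots f" using croots_f by auto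
  have p1: "\<sigma> b1 = b1 \<or> \<sigma> b1 = - b1" by (rule fix_a_pm[OF s fa rb(1)])
  have p2: "\<sigma> b2 = b2 \<or> \<sigma> b2 = - b2" by (rule fix_a_pm[OF s fa rb(2)])
  have p3: "\<sigma> b3 = b3 \<or> \<sigma> b3 = - b3" by (rule fix_a_pm[OF s fa rb(3)])
  have "\<sigma> (b1 * b2 * b3) = \<sigma> (- e)" by (simp add: e_def)
  also have "\<dots> = - \<sigma> e" using in_L(4) by (rule s.uminus)
  also have "\<dots> = b1 * b2 * b3" using fe by (simp add: e_def)
  finally have P: "\<sigma> b1 * \<sigma> b2 * \<sigma> b3 = b1 * b2 * b3" using in_L L_field by (simp add: s.mult csf_basic)
  have Sv: "b1 + b2 + b3 = - of_int n / e" using vn e0 by (simp add: e_def field_simps)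
  have "\<sigma> (b1 + b2 + b3) = \<sigma> (- of_int n / e)" by (simp only: Sv)
  also have "\<dots> = \<sigma> (- of_int n) / \<sigma> e" using in_L(4) L_field by (intro s.divide) (simp_all add: csf_uminus csf_of_int)
  also have "\<dots> = - of_int n / e" using fe L_field by (simp add: s.uminus csf_of_int)
  finally have S0: "\<sigma> (b1 + b2 + b3) = - of_int n / e" .
  have S1: "\<sigma> (b1 + b2 + b3) = \<sigma> b1 + \<sigma> b2 + \<sigma> b3" using in_L L_field by (simp add: s.add csf_basic)
  have S: "\<sigma> b1 + \<sigma> b2 + \<sigma> b3 = b1 + b2 + b3" using S0 S1 Sv by metis
  have b0: "b1 * b2 * b3 \<noteq> 0" using bnz by simp
  have n12: "b1 \<noteq> - b2" and n13: "b1 \<noteq> - b3" and n23: "b2 \<noteq> - b3"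
    using d by (auto simp: a1_def a2_def a3_def)
  have "\<sigma> b1 = b1 \<and> \<sigma> b2 = b2 \<and> \<sigma> b3 = b3"
  proof (rule ccontr)
    assume nn: "\<not> (\<sigma> b1 = b1 \<and> \<sigma> b2 = b2 \<and> \<sigma> b3 = b3)"
    have nb: "\<And>w::complex. w \<noteq> 0 \<Longrightarrow> - w \<noteq> w" using neg_self_c by blast
    from p1 p2 p3 nn consider
        "\<sigma> b1 = - b1" "\<sigma> b2 = b2" "\<sigma> b3 = b3"
      | "\<sigma> b1 = b1" "\<sigma> b2 = - b2" "\<sigma> b3 = b3"
      | "\<sigma> b1 = b1" "\<sigma> b2 = b2" "\<sigma> b3 = - b3"
      | "\<sigma> b1 = - b1" "\<sigma> b2 = - b2" "\<sigma> b3 = b3"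
      | "\<sigma> b1 = - b1" "\<sigma> b2 = b2" "\<sigma> b3 = - b3"
      | "\<sigma> b1 = b1" "\<sigma> b2 = - b2" "\<sigma> b3 = - b3"
      | "\<sigma> b1 = - b1" "\<sigma> b2 = - b2" "\<sigma> b3 = - b3" by blast
    then show False
    proof cases
      case 1 then show False using P nb[OF b0] by simp
    next
      case 2 then show False using P nb[OF b0] by simp
    next
      case 3 then show False using P nb[OF b0] by simp
    next
      case 4 then have "2 * (b1 + b2) = 0" using S by (simp add: algebra_simps)
      then have "b1 + b2 = 0" by (simp only: mult_eq_0_iff) simp
      then show False using n12 by (simp add: eq_neg_iff_add_eq_0)
    next
      case 5 then have "2 * (b1 + b3) = 0" using S by (simp add: algebra_simps)
      then have "b1 + b3 = 0" by (simp only: mult_eq_0_iff) simp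
      then show False using n13 by (simp add: eq_neg_iff_add_eq_0)
    next
      case 6 then have "2 * (b2 + b3) = 0" using S by (simp add: algebra_simps)
      then have "b2 + b3 = 0" by (simp only: mult_eq_0_iff) simp
      then show False using n23 by (simp add: eq_neg_iff_add_eq_0)
    next
      case 7 then show False using P nb[OF b0] by simp
    qed
  qed
  then have "\<And>x. x \<in> croots f \<Longrightarrow> \<sigma> x = x" using croots_f in_L by (auto simp: s.uminus)
  then show ?thesis by (rule id_of_roots[OF s])
qed

lemma fix_one_delta:
  assumes s: "\<sigma> \<in> field_auts L" and d0: "\<delta> \<noteq> 0" and sd: "\<sigma> \<delta> = \<delta>"
    and fx: "\<sigma> a1 = a1 \<or> \<sigma> a2 = a2 \<or> \<sigma> a3 = a3"
  shows "\<sigma> a1 = a1 \<and> \<sigma> a2 = a2 \<and> \<sigma> a3 = a3"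
proof -
  interpret s: aut L \<sigma> by (rule aut_sf[OF s])
  have inj: "inj_on \<sigma> L" using s.bij by (simp add: bij_betw_def)
  have I: "\<And>u v. u \<in> L \<Longrightarrow> v \<in> L \<Longrightarrow> \<sigma> u = \<sigma> v \<Longrightarrow> u = v" using inj by (auto simp: inj_on_def)
  note im = img_a[OF s]
  have dd: "a1 \<noteq> a2" "a1 \<noteq> a3" "a2 \<noteq> a3" using d0 by (auto simp: \<delta>_def)
  have sdel: "(\<sigma> a1 - \<sigma> a2) * (\<sigma> a2 - \<sigma> a3) * (\<sigma> a3 - \<sigma> a1) = (a1 - a2) * (a2 - a3) * (a3 - a1)"
    using sd img_delta[OF s] by (simp add: \<delta>_def)
  have nd: "\<delta> \<noteq> - \<delta>" using d0 neg_self_c[of \<delta>] by auto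
  consider "\<sigma> a1 = a1" | "\<sigma> a2 = a2" | "\<sigma> a3 = a3" using fx by blast
  then show ?thesis
  proof cases
    case 1
    have "\<sigma> a2 \<noteq> a1" using I[of a2 a1] 1 in_L dd by auto
    moreover have "\<sigma> a3 \<noteq> a1" using I[of a3 a1] 1 in_L dd by auto
    moreover have "\<not> (\<sigma> a2 = a3 \<and> \<sigma> a3 = a2)"
    proof
      assume "\<sigma> a2 = a3 \<and> \<sigma> a3 = a2"
      then have "\<delta> = - \<delta>" using sdel 1 by (simp add: \<delta>_def algebra_simps)
      then show False using nd by simp
    qed
    moreover have "\<sigma> a2 \<noteq> \<sigma> a3" using I[of a2 a3] in_L dd by auto
    ultimately show ?thesis using 1 im by auto
  next
    case 2
    have "\<sigma> a1 \<noteq> a2" using I[of a1 a2] 2 in_L dd by auto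
    moreover have "\<sigma> a3 \<noteq> a2" using I[of a3 a2] 2 in_L dd by auto
    moreover have "\<not> (\<sigma> a1 = a3 \<and> \<sigma> a3 = a1)"
    proof
      assume "\<sigma> a1 = a3 \<and> \<sigma> a3 = a1"
      then have "\<delta> = - \<delta>" using sdel 2 by (simp add: \<delta>_def algebra_simps)
      then show False using nd by simp
    qed
    moreover have "\<sigma> a1 \<noteq> \<sigma> a3" using I[of a1 a3] in_L dd by auto
    ultimately show ?thesis using 2 im by auto
  next
    case 3
    have "\<sigma> a1 \<noteq> a3" using I[of a1 a3] 3 in_L dd by auto
    moreover have "\<sigma> a2 \<noteq> a3" using I[of a2 a3] 3 in_L dd by auto
    moreover have "\<not> (\<sigma> a1 = a2 \<and> \<sigma> a2 = a1)"
    proof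
      assume "\<sigma> a1 = a2 \<and> \<sigma> a2 = a1"
      then have "\<delta> = - \<delta>" using sdel 3 by (simp add: \<delta>_def algebra_simps)
      then show False using nd by simp
    qed
    moreover have "\<sigma> a1 \<noteq> \<sigma> a2" using I[of a1 a2] in_L dd by auto
    ultimately show ?thesis using 3 im by auto
  qed
qed

lemma cycle:
  assumes s: "\<sigma> \<in> field_auts L" and d: "a1 \<noteq> a2" "a1 \<noteq> a3" "a2 \<noteq> a3"
    and nf: "\<sigma> a1 \<noteq> a1" "\<sigma> a2 \<noteq> a2" "\<sigma> a3 \<noteq> a3"
  shows "(\<sigma> a1 = a2 \<and> \<sigma> a2 = a3 \<and> \<sigma> a3 = a1) \<or> (\<sigma> a1 = a3 \<and> \<sigma> a2 = a1 \<and> \<sigma> a3 = a2)"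
proof -
  interpret s: aut L \<sigma> by (rule aut_sf[OF s])
  have inj: "inj_on \<sigma> L" using s.bij by (simp add: bij_betw_def)
  show ?thesis by (rule perm3_cycle[OF inj in_L(5,6,7) d img_a[OF s] nf])
qed

lemma cycle_delta:
  assumes s: "\<sigma> \<in> field_auts L" and d: "a1 \<noteq> a2" "a1 \<noteq> a3" "a2 \<noteq> a3"
    and nf: "\<sigma> a1 \<noteq> a1" "\<sigma> a2 \<noteq> a2" "\<sigma> a3 \<noteq> a3"
  shows "\<sigma> \<delta> = \<delta>"
  using cycle[OF s d nf] img_delta[OF s] by (auto simp: \<delta>_def algebra_simps)

end


lemma shift_decomp:
  fixes P :: "rat poly" and y :: complex and D :: rat
  assumes y2: "y^2 = of_rat D"
  shows "\<exists>A B. \<forall>z. rp P (z + y) = rp A z + y * rp B z \<and> rp P (z - y) = rp A z - y * rp B z"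
proof (induction P)
  case 0
  show ?case by (intro exI[of _ 0]) simp
next
  case (pCons a P)
  then obtain A B where AB: "\<And>z. rp P (z + y) = rp A z + y * rp B z \<and> rp P (z - y) = rp A z - y * rp B z"
    by blast
  define A' where "A' = [:a:] + pCons 0 A + smult D B"
  define B' where "B' = pCons 0 B + A"
  have eA: "rp A' z = of_rat a + z * rp A z + of_rat D * rp B z" for z
    by (simp add: A'_def rp_add rp_smult rp_pCons rp_const)
  have eB: "rp B' z = z * rp B z + rp A z" for z
    by (simp add: B'_def rp_add rp_pCons)
  have "\<forall>z. rp (pCons a P) (z + y) = rp A' z + y * rp B' z \<and> rp (pCons a P) (z - y) = rp A' z - y * rp B' z"
  proof
    fix z
    have "rp (pCons a P) (z + y) = of_rat a + (z + y) * (rp A z + y * rp B z)"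
      using AB by (simp add: rp_pCons)
    also have "\<dots> = of_rat a + z * rp A z + y^2 * rp B z + y * (z * rp B z + rp A z)"
      by (simp add: algebra_simps power2_eq_square)
    also have "\<dots> = rp A' z + y * rp B' z" using y2 eA eB by simp
    finally have 1: "rp (pCons a P) (z + y) = rp A' z + y * rp B' z" .
    have "rp (pCons a P) (z - y) = of_rat a + (z - y) * (rp A z - y * rp B z)"
      using AB by (simp add: rp_pCons)
    also have "\<dots> = of_rat a + z * rp A z + y^2 * rp B z - y * (z * rp B z + rp A z)"
      by (simp add: algebra_simps power2_eq_square)
    also have "\<dots> = rp A' z - y * rp B' z" using y2 eA eB by simp
    finally have 2: "rp (pCons a P) (z - y) = rp A' z - y * rp B' z" .
    show "rp (pCons a P) (z + y) = rp A' z + y * rp B' z \<and> rp (pCons a P) (z - y) = rp A' z - y * rp B' z"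
      using 1 2 by blast
  qed
  then show ?case by blast
qed

lemma csf_numeral: "is_csubfield K \<Longrightarrow> numeral w \<in> K"
  using csf_of_nat[of K "numeral w"] by simp

lemma csf_gp: "is_csubfield K \<Longrightarrow> x \<in> K \<Longrightarrow> u \<in> K \<Longrightarrow> v \<in> K \<Longrightarrow> 3 * x^2 - 2 * u * x + v \<in> K"
  by (simp add: csf_basic csf_power csf_numeral)

lemma irr_factor_root:
  fixes F :: "rat poly"
  shows "F \<noteq> 0 \<Longrightarrow> rp F \<theta> = 0 \<Longrightarrow> \<exists>p. irreducible p \<and> rp p \<theta> = 0"
proof (induction "degree F" arbitrary: F rule: less_induct)
  case (less F)
  show ?case
  proof (cases "irreducible F")
    case True then show ?thesis using less.prems by blast
  next
    case False
    have nu: "\<not> is_unit F"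
    proof
      assume "is_unit F"
      then have "degree F = 0" using less.prems(1) by (simp add: is_unit_iff_degree)
      then have "F = [:coeff F 0:]" by (simp add: degree_0_id)
      then have "rp F \<theta> = of_rat (coeff F 0)" by (metis rp_const)
      moreover have "coeff F 0 \<noteq> 0" using \<open>F = [:coeff F 0:]\<close> less.prems(1) by (metis pCons_0_0)
      ultimately show False using less.prems(2) by simp
    qed
    have "\<exists>u v. F = u * v \<and> \<not> is_unit u \<and> \<not> is_unit v"
      using False less.prems(1) nu by (simp add: irreducible_def)
    then obtain u v where uv: "F = u * v" "\<not> is_unit u" "\<not> is_unit v" by blast
    have u0: "u \<noteq> 0" and v0: "v \<noteq> 0" using uv less.prems(1) by auto
    have du: "degree u > 0" using uv(2) u0 by (simp add: is_unit_iff_degree)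
    have dv: "degree v > 0" using uv(3) v0 by (simp add: is_unit_iff_degree)
    have dF: "degree F = degree u + degree v" using uv(1) u0 v0 by (simp add: degree_mult_eq)
    have "rp u \<theta> * rp v \<theta> = 0" using less.prems(2) uv(1) by (simp add: rp_mult)
    then consider "rp u \<theta> = 0" | "rp v \<theta> = 0" by auto
    then show ?thesis
    proof cases
      case 1 then show ?thesis using less.hyps[of u] dF dv u0 by simp
    next
      case 2 then show ?thesis using less.hyps[of v] dF du v0 by simp
    qed
  qed
qed

context cfg
begin

abbreviation "fQ \<equiv> map_poly (of_int :: int \<Rightarrow> rat) f"

lemma rp_fQ: "rp fQ z = poly (map_poly of_int f) z"
proof -
  have "map_poly (of_rat :: rat \<Rightarrow> complex) fQ = map_poly (of_rat \<circ> of_int) f"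
    by (simp add: map_poly_map_poly)
  also have "(of_rat \<circ> of_int :: int \<Rightarrow> complex) = of_int" by (simp add: fun_eq_iff)
  finally show ?thesis by simp
qed

lemma sum_a: "a1 + a2 + a3 = - (of_int (n^2 div c) - 2 * of_int m)"
  unfolding N vm a1_def a2_def a3_def by algebra

lemma sum2_a: "a1 * a2 + a1 * a3 + a2 * a3 = of_int m ^ 2 - 2 * of_int n"
  unfolding vm vn a1_def a2_def a3_def by algebra

lemma e_formula: "e * (b1 * (a1 - of_int m)) = of_int c - of_int n * a1"
  unfolding e_def vc vm vn a1_def by algebra

lemma prim_exists:
  assumes irr: "irreducible gQ"
  shows "\<exists>\<theta> p. prim \<theta> p f"
proof -
  have d: "a1 \<noteq> a2" "a1 \<noteq> a3" "a2 \<noteq> a3" by (rule irr_distinct[OF irr])+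
  then have d0: "\<delta> \<noteq> 0" by (simp add: \<delta>_def)
  define Dr :: rat where "Dr = of_int d * (of_int m * of_int n - of_int c)^2 / (of_int c)^2"
  have cc: "(of_int c :: complex)^2 \<noteq> 0" using c0 by simp
  have D2: "\<delta>^2 = of_rat Dr"
  proof -
    have "\<delta>^2 = of_int d * (of_int m * of_int n - of_int c)^2 / (of_int c)^2"
      using disc cc by (simp add: nonzero_eq_divide_eq)
    then show ?thesis by (simp add: Dr_def of_rat_divide of_rat_mult of_rat_power of_rat_diff)
  qed
  have "\<exists>k::nat. poly (map_poly of_int f) (b1 + 2 * (of_nat k + 1) * \<delta>) \<noteq> 0"
  proof (rule ccontr)
    assume "\<not> ?thesis"
    then have sub: "(\<lambda>k::nat. b1 + 2 * (of_nat k + 1) * \<delta>) ` UNIV \<subseteq> croots f"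
      by (auto simp: croots_def)
    have "inj (\<lambda>k::nat. b1 + 2 * (of_nat k + 1) * \<delta>)"
      using d0 by (auto simp: inj_on_def)
    moreover have "finite ((\<lambda>k::nat. b1 + 2 * (of_nat k + 1) * \<delta>) ` UNIV)"
      using sub croots_f by (metis finite.emptyI finite_insert finite_subset)
    ultimately show False using finite_imageD by fastforce
  qed
  then obtain k :: nat where k: "poly (map_poly of_int f) (b1 + 2 * (of_nat k + 1) * \<delta>) \<noteq> 0" by blast
  define t :: rat where "t = of_nat k + 1"
  have t0: "t \<noteq> 0" by (simp add: t_def)
  define y where "y = of_rat t * \<delta>"
  have y2: "y^2 = of_rat (t^2 * Dr)" by (simp add: y_def D2 power_mult_distrib of_rat_mult of_rat_power)
  obtain A B where AB: "\<And>z. rp fQ (z + y) = rp A z + y * rp B z \<and> rp fQ (z - y) = rp A z - y * rp B z"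
    using shift_decomp[OF y2, of fQ] by blast
  define \<theta> where "\<theta> = b1 + y"
  have r1: "rp A \<theta> - y * rp B \<theta> = 0"
  proof -
    have "b1 \<in> croots f" using croots_f by simp
    then have "poly (map_poly of_int f) b1 = 0" by (simp add: croots_def)
    then have "rp fQ (\<theta> - y) = 0" by (simp add: \<theta>_def rp_fQ)
    then show ?thesis using AB[of \<theta>] by simp
  qed
  have r2: "rp A \<theta> + y * rp B \<theta> \<noteq> 0"
  proof -
    have "\<theta> + y = b1 + 2 * (of_nat k + 1) * \<delta>" by (simp add: \<theta>_def y_def t_def algebra_simps of_rat_add)
    then have "rp fQ (\<theta> + y) \<noteq> 0" using k by (simp add: rp_fQ)
    then show ?thesis using AB[of \<theta>] by simp
  qed
  define F2 where "F2 = A * A - smult (t^2 * Dr) (B * B)"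
  have eF2: "rp F2 z = rp fQ (z - y) * rp fQ (z + y)" for z
  proof -
    have "rp F2 z = rp A z * rp A z - y^2 * (rp B z * rp B z)"
      by (simp add: F2_def rp_diff rp_mult rp_smult y2)
    also have "\<dots> = (rp A z - y * rp B z) * (rp A z + y * rp B z)"
      by (simp add: algebra_simps power2_eq_square)
    finally show ?thesis using AB[of z] by simp
  qed
  have F20: "rp F2 \<theta> = 0" using eF2[of \<theta>] r1 AB[of \<theta>] by simp
  have F2nz: "F2 \<noteq> 0"
  proof
    assume F2: "F2 = 0"
    have fin: "finite ((\<lambda>x. x + y) ` croots f \<union> (\<lambda>x. x - y) ` croots f)"
      using croots_f by simp
    obtain z where z: "z \<notin> (\<lambda>x. x + y) ` croots f \<union> (\<lambda>x. x - y) ` croots f"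
      using ex_new_if_finite[OF infinite_UNIV_char_0 fin] by blast
    have "z - y \<notin> croots f"
    proof
      assume "z - y \<in> croots f"
      then have "(z - y) + y \<in> (\<lambda>x. x + y) ` croots f" by blast
      then show False using z by simp
    qed
    moreover have "z + y \<notin> croots f"
    proof
      assume "z + y \<in> croots f"
      then have "(z + y) - y \<in> (\<lambda>x. x - y) ` croots f" by blast
      then show False using z by simp
    qed
    ultimately have "rp F2 z \<noteq> 0" using eF2[of z] by (simp add: rp_fQ croots_def)
    then show False using F2 by simp
  qed
  obtain p where p: "irreducible p" "rp p \<theta> = 0" using irr_factor_root[OF F2nz F20] by blast
  interpret al: alg \<theta> p using p by (simp add: alg_def)
  have K: "is_csubfield al.Qt" by (rule al.Qt_field)
  have \<theta>Q: "\<theta> \<in> al.Qt" using al.Qt_rp[of "[:0,1:]"] by (simp add: map_poly_pCons)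
  have B0: "rp B \<theta> \<noteq> 0" using r1 r2 by auto
  have "y = rp A \<theta> / rp B \<theta>" using r1 B0 by (simp add: field_simps)
  then have yQ: "y \<in> al.Qt" using K al.Qt_rp by (simp add: csf_divide)
  have "\<delta> = y / of_rat t" using t0 by (simp add: y_def)
  then have dQ: "\<delta> \<in> al.Qt" using K yQ by (simp add: csf_divide csf_of_rat)
  have b1Q: "b1 \<in> al.Qt" using K yQ \<theta>Q by (metis \<theta>_def add_diff_cancel_right' csf_basic(4))
  have a1Q: "a1 \<in> al.Qt" using K b1Q by (simp add: a1_def csf_power)
  have ofi: "of_int z \<in> al.Qt" for z using K by (rule csf_of_int)
  have a1m: "a1 - of_int m \<noteq> 0"
  proof
    assume "a1 - of_int m = 0"
    then have "a1 \<in> \<rat>" by simp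
    then show False using irr_not_rat[OF irr, of a1] by simp
  qed
  have eQ: "e \<in> al.Qt"
  proof -
    have "e = (of_int c - of_int n * a1) / (b1 * (a1 - of_int m))"
      using e_formula bnz a1m by (simp add: field_simps)
    then show ?thesis using K b1Q a1Q ofi by (simp add: csf_basic csf_divide)
  qed
  have "a1 + a2 + a3 = of_int (2 * m - n^2 div c)" by (simp add: sum_a)
  then have s1Q: "a1 + a2 + a3 \<in> al.Qt" by (metis ofi)
  have "a1 * a2 + a1 * a3 + a2 * a3 = of_int (m^2 - 2 * n)" by (simp add: sum2_a)
  then have s2Q: "a1 * a2 + a1 * a3 + a2 * a3 \<in> al.Qt" by (metis ofi)
  have gp: "(a1 - a2) * (a1 - a3) = 3 * a1^2 - 2 * (a1 + a2 + a3) * a1 + (a1 * a2 + a1 * a3 + a2 * a3)"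
    by (simp add: algebra_simps power2_eq_square)
  have gpQ: "(a1 - a2) * (a1 - a3) \<in> al.Qt"
    unfolding gp by (rule csf_gp[OF K a1Q s1Q s2Q])
  have gp0: "(a1 - a2) * (a1 - a3) \<noteq> 0" using d by simp
  have "a2 - a3 = - \<delta> / ((a1 - a2) * (a1 - a3))"
    using gp0 by (simp add: \<delta>_def field_simps)
  then have dA: "a2 - a3 \<in> al.Qt" using K dQ gpQ by (simp add: csf_divide csf_uminus)
  have sA: "a2 + a3 \<in> al.Qt"
  proof -
    have "a2 + a3 = (a1 + a2 + a3) - a1" by simp
    then show ?thesis using K s1Q a1Q by (metis csf_basic(4))
  qed
  have a2Q: "a2 \<in> al.Qt"
  proof -
    have "a2 = ((a2 + a3) + (a2 - a3)) / 2" by simp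
    then show ?thesis using K sA dA by (metis csf_basic(3) csf_divide csf_of_nat of_nat_numeral)
  qed
  have a3Q: "a3 \<in> al.Qt"
  proof -
    have "a3 = a2 - (a2 - a3)" by simp
    then show ?thesis using K a2Q dA by (metis csf_basic(4))
  qed
  have Sb: "b1 + b2 + b3 = - of_int n / e" using vn e0 by (simp add: e_def field_simps)
  have SQ: "b1 + b2 + b3 \<in> al.Qt" unfolding Sb using K eQ ofi by (simp add: csf_divide csf_uminus)
  have pQ: "b2 + b3 \<in> al.Qt"
  proof -
    have "b2 + b3 = (b1 + b2 + b3) - b1" by simp
    then show ?thesis using K SQ b1Q by (metis csf_basic(4))
  qed
  have p0: "b2 + b3 \<noteq> 0"
  proof
    assume "b2 + b3 = 0"
    then have "b2 = - b3" by (simp add: eq_neg_iff_add_eq_0)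
    then have "a2 = a3" unfolding a2_def a3_def by simp
    then show False using d by simp
  qed
  have "b2 - b3 = (a2 - a3) / (b2 + b3)"
    using p0 by (simp add: a2_def a3_def field_simps power2_eq_square)
  then have mQ: "b2 - b3 \<in> al.Qt" using K dA pQ by (simp add: csf_divide)
  have b2Q: "b2 \<in> al.Qt"
  proof -
    have "b2 = ((b2 + b3) + (b2 - b3)) / 2" by simp
    then show ?thesis using K pQ mQ by (metis csf_basic(3) csf_divide csf_of_nat of_nat_numeral)
  qed
  have b3Q: "b3 \<in> al.Qt"
  proof -
    have "b3 = b2 - (b2 - b3)" by simp
    then show ?thesis using K b2Q mQ by (metis csf_basic(4))
  qed
  have gen: "croots f \<subseteq> range (\<lambda>q. rp q \<theta>)"
    using croots_f b1Q b2Q b3Q K csf_uminus unfolding al.Qt_def by auto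
  have \<theta>L: "\<theta> \<in> L"
  proof -
    have "y \<in> L" unfolding y_def using in_L L_field by (simp add: csf_basic csf_of_rat)
    then show ?thesis unfolding \<theta>_def using in_L L_field by (simp add: csf_basic)
  qed
  have "prim \<theta> p f" using p f_nz \<theta>L gen by (simp add: prim_def prim_axioms_def alg_def)
  then show ?thesis by blast
qed

lemma fixed_rat_cfg:
  assumes irr: "irreducible gQ" and x: "x \<in> L"
    and fx: "\<And>\<sigma>. \<sigma> \<in> field_auts L \<Longrightarrow> \<sigma> x = x"
  shows "x \<in> \<rat>"
proof -
  obtain \<theta> p where "prim \<theta> p f" using prim_exists[OF irr] by blast
  then interpret pr: prim \<theta> p f .
  show ?thesis using pr.fixed_rat[of x] x fx by blast
qed

end


context cfg
begin

lemma one_apply: "x \<in> L \<Longrightarrow> \<one>\<^bsub>G\<^esub> x = x" by (simp add: gal_one)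

lemma mult_apply: "x \<in> L \<Longrightarrow> (\<sigma> \<otimes>\<^bsub>G\<^esub> \<tau>) x = \<sigma> (\<tau> x)" by (simp add: gal_mult)

lemma pow3_apply: "\<sigma> \<in> carrier G \<Longrightarrow> x \<in> L \<Longrightarrow> (\<sigma> [^]\<^bsub>G\<^esub> (3::nat)) x = \<sigma> (\<sigma> (\<sigma> x))"
  using gal_pow[of \<sigma> f x 3] by (simp add: eval_nat_numeral)

lemma funpow_fix: "\<sigma> \<in> carrier G \<Longrightarrow> x \<in> L \<Longrightarrow> \<sigma> x = x \<Longrightarrow> (\<sigma> ^^ k) x = x"
  by (induction k) auto

lemma e_neq: "e \<noteq> - e" using e0 neg_self_c[of e] by auto

lemma forward:
  assumes iso: "G \<cong> integer_mod_group 6"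
  shows "\<not> (\<exists>k. - c = k^2) \<and> irreducible gQ \<and> (\<exists>k. d = k^2)"
proof -
  interpret grp: group G by (rule group_gal)
  let ?Z = "integer_mod_group 6"
  have "?Z \<cong> G" using group_gal iso by (rule group.iso_sym)
  then obtain \<psi> where \<psi>: "\<psi> \<in> iso ?Z G" by (auto simp: is_iso_def)
  interpret h: group_hom ?Z G \<psi>
    using \<psi> group_gal by (simp add: group_hom_def group_hom_axioms_def iso_def)
  have bij: "bij_betw \<psi> (carrier ?Z) (carrier G)" using \<psi> by (simp add: iso_def)
  have carrZ: "carrier ?Z = {0..<6}" by (simp add: carrier_integer_mod_group)
  have one_in: "(1::int) \<in> carrier ?Z" by (simp add: carrZ)
  define \<sigma> where "\<sigma> = \<psi> 1"
  have sG: "\<sigma> \<in> carrier G" unfolding \<sigma>_def using one_in h.hom_closed by blast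
  have s: "\<sigma> \<in> field_auts L" using sG by (simp add: gal_carrier)
  interpret s: aut L \<sigma> by (rule aut_sf[OF s])
  have pw: "\<psi> (int k) = \<sigma> [^]\<^bsub>G\<^esub> k" if "k < 6" for k :: nat
  proof -
    have "\<psi> (1 [^]\<^bsub>?Z\<^esub> k) = \<sigma> [^]\<^bsub>G\<^esub> k" using h.hom_nat_pow[OF one_in] \<sigma>_def by simp
    moreover have "1 [^]\<^bsub>?Z\<^esub> k = int k" using that by simp
    ultimately show ?thesis by simp
  qed
  have ne1: "\<sigma> [^]\<^bsub>G\<^esub> k \<noteq> \<one>\<^bsub>G\<^esub>" if "0 < k" "k < 6" for k :: nat
  proof
    assume "\<sigma> [^]\<^bsub>G\<^esub> k = \<one>\<^bsub>G\<^esub>"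
    then have "\<psi> (int k) = \<psi> 0" using pw[OF that(2)] h.hom_one by simp
    moreover have "int k \<in> carrier ?Z" "(0::int) \<in> carrier ?Z" using that by (simp_all add: carrZ)
    moreover have "inj_on \<psi> (carrier ?Z)" using bij by (simp add: bij_betw_def)
    ultimately have "int k = 0" by (meson inj_onD)
    then show False using that by simp
  qed
  have s6: "\<sigma> [^]\<^bsub>G\<^esub> (6::nat) = \<one>\<^bsub>G\<^esub>"
  proof -
    have "\<sigma> [^]\<^bsub>G\<^esub> (6::nat) = \<sigma> [^]\<^bsub>G\<^esub> (5::nat) \<otimes>\<^bsub>G\<^esub> \<sigma> [^]\<^bsub>G\<^esub> (1::nat)"
      using grp.nat_pow_mult[OF sG, of 5 1] by simp
    also have "\<dots> = \<psi> 5 \<otimes>\<^bsub>G\<^esub> \<psi> 1" using pw[of 5] pw[of 1] by simp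
    also have "\<dots> = \<psi> (5 \<otimes>\<^bsub>?Z\<^esub> 1)" using h.hom_mult[of 5 1] by (simp add: carrZ)
    also have "\<dots> = \<psi> 0" by simp
    also have "\<dots> = \<one>\<^bsub>G\<^esub>" using h.hom_one by simp
    finally show ?thesis .
  qed
  have allpow: "\<exists>k<(6::nat). \<tau> = \<sigma> [^]\<^bsub>G\<^esub> k" if tG: "\<tau> \<in> carrier G" for \<tau>
  proof -
    have "\<tau> \<in> \<psi> ` carrier ?Z" using bij tG by (simp add: bij_betw_def)
    then obtain z where z: "z \<in> carrier ?Z" "\<tau> = \<psi> z" by blast
    then have "z = int (nat z)" "nat z < 6" by (auto simp: carrZ)
    then show ?thesis using z pw by metis
  qed
  have s2: "\<sigma> [^]\<^bsub>G\<^esub> (2::nat) \<noteq> \<one>\<^bsub>G\<^esub>" by (rule ne1) auto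
  have irr: "irreducible gQ"
  proof (rule ccontr)
    assume "\<not> irreducible gQ"
    then obtain a where a: "a \<in> {a1,a2,a3}" "a \<in> \<rat>" using not_irr_rat_root by blast
    then have "\<sigma> a = a" by (simp add: s.rat)
    then have "\<sigma> a1 = a1 \<or> \<sigma> a2 = a2 \<or> \<sigma> a3 = a3" using a by auto
    then show False using order6_no_fix[OF sG s2 s6] by blast
  qed
  have d: "a1 \<noteq> a2" "a1 \<noteq> a3" "a2 \<noteq> a3" by (rule irr_distinct[OF irr])+
  have nf: "\<sigma> a1 \<noteq> a1" "\<sigma> a2 \<noteq> a2" "\<sigma> a3 \<noteq> a3" using order6_no_fix[OF sG s2 s6] by blast+
  have cyc: "(\<sigma> a1 = a2 \<and> \<sigma> a2 = a3 \<and> \<sigma> a3 = a1) \<or> (\<sigma> a1 = a3 \<and> \<sigma> a2 = a1 \<and> \<sigma> a3 = a2)"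
    by (rule cycle[OF s d nf])
  have s3a: "(\<sigma> [^]\<^bsub>G\<^esub> (3::nat)) a1 = a1" "(\<sigma> [^]\<^bsub>G\<^esub> (3::nat)) a2 = a2" "(\<sigma> [^]\<^bsub>G\<^esub> (3::nat)) a3 = a3"
    using cyc in_L by (auto simp: pow3_apply[OF sG])
  have nsq: "\<not> (\<exists>k. - c = k^2)"
  proof
    assume "\<exists>k. - c = k^2"
    then obtain k where k: "- c = k^2" by blast
    have "e^2 = (of_int k)^2" using e2 k by (metis of_int_minus of_int_power)
    then have "e = of_int k \<or> e = - of_int k" by (simp add: power2_eq_iff)
    then have eQ: "e \<in> \<rat>" by auto
    define \<tau> where "\<tau> = \<sigma> [^]\<^bsub>G\<^esub> (3::nat)"
    have tG: "\<tau> \<in> carrier G" using sG by (simp add: \<tau>_def)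
    have t: "\<tau> \<in> field_auts L" using tG by (simp add: gal_carrier)
    have te: "\<tau> e = e" using aut.rat[OF aut_sf[OF t] eQ] .
    have "\<tau> = \<one>\<^bsub>G\<^esub>" using fix_e_a_id[OF t d te] s3a by (simp add: \<tau>_def)
    then show False using ne1[of 3] by (simp add: \<tau>_def)
  qed
  have sd: "\<sigma> \<delta> = \<delta>" by (rule cycle_delta[OF s d nf])
  have dQ: "\<delta> \<in> \<rat>"
  proof (rule fixed_rat_cfg[OF irr in_L(8)])
    fix \<tau> assume "\<tau> \<in> field_auts L"
    then have tG: "\<tau> \<in> carrier G" by (simp add: gal_carrier)
    from allpow[OF tG] obtain k :: nat where k: "\<tau> = \<sigma> [^]\<^bsub>G\<^esub> k" by blast
    have "\<tau> \<delta> = (\<sigma> [^]\<^bsub>G\<^esub> k) \<delta>" using k by simp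
    also have "\<dots> = (\<sigma> ^^ k) \<delta>" by (rule gal_pow[OF sG in_L(8)])
    also have "\<dots> = \<delta>" by (rule funpow_fix[OF sG in_L(8) sd])
    finally show "\<tau> \<delta> = \<delta>" .
  qed
  have d0: "\<delta> \<noteq> 0" using d by (simp add: \<delta>_def)
  have mc: "of_int m * of_int n - of_int c \<noteq> (0::complex)"
  proof
    assume "of_int m * of_int n - of_int c = (0::complex)"
    then have "\<delta>^2 * (of_int c)^2 = 0" using disc by simp
    then show False using d0 c0 by simp
  qed
  have "of_int d = (\<delta> * of_int c / (of_int m * of_int n - of_int c))^2"
    using disc mc by (simp add: power_divide power_mult_distrib field_simps)
  moreover have "\<delta> * of_int c / (of_int m * of_int n - of_int c) \<in> \<rat>" using dQ by simp
  ultimately have dsq: "\<exists>k. d = k^2" using rat_sq_int by metis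
  show ?thesis using nsq irr dsq by blast
qed

end


context cfg
begin

lemma backward:
  assumes nsq: "\<not> (\<exists>k. - c = k^2)" and irr: "irreducible gQ" and dsq: "\<exists>k. d = k^2"
  shows "G \<cong> integer_mod_group 6"
proof -
  interpret grp: group G by (rule group_gal)
  let ?Z = "integer_mod_group 6"
  have d: "a1 \<noteq> a2" "a1 \<noteq> a3" "a2 \<noteq> a3" by (rule irr_distinct[OF irr])+
  have d0: "\<delta> \<noteq> 0" using d by (simp add: \<delta>_def)
  obtain k where k: "d = k^2" using dsq by blast
  have dQ: "\<delta> \<in> \<rat>"
  proof -
    have "(\<delta> * of_int c)^2 = (of_int k * (of_int m * of_int n - of_int c))^2"
      using disc k by (simp add: power_mult_distrib)
    then have "\<delta> * of_int c = of_int k * (of_int m * of_int n - of_int c) \<or>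
               \<delta> * of_int c = - (of_int k * (of_int m * of_int n - of_int c))"
      by (simp add: power2_eq_iff)
    then have "\<delta> * of_int c \<in> \<rat>" by auto
    then have "\<delta> * of_int c / of_int c \<in> \<rat>" by (intro Rats_divide) simp_all
    moreover have "(of_int c :: complex) \<noteq> 0" using c0 by simp
    ultimately show ?thesis by simp
  qed
  have eQ: "e \<notin> \<rat>"
  proof
    assume "e \<in> \<rat>"
    moreover have "e^2 = of_int (- c)" using e2 by simp
    ultimately show False using rat_sq_int nsq by blast
  qed
  have a1Q: "a1 \<notin> \<rat>" using irr_not_rat[OF irr, of a1] by simp
  obtain \<tau> where t: "\<tau> \<in> field_auts L" and te: "\<tau> e \<noteq> e"
    using fixed_rat_cfg[OF irr in_L(4)] eQ by blast
  obtain \<tau>' where t': "\<tau>' \<in> field_auts L" and ta: "\<tau>' a1 \<noteq> a1"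
    using fixed_rat_cfg[OF irr in_L(5)] a1Q by blast
  have fixd: "\<psi> \<delta> = \<delta>" if "\<psi> \<in> field_auts L" for \<psi>
    using aut.rat[OF aut_sf[OF that] dQ] .
  have fix_all: "\<psi> a1 = a1 \<and> \<psi> a2 = a2 \<and> \<psi> a3 = a3"
    if "\<psi> \<in> field_auts L" "\<psi> a1 = a1 \<or> \<psi> a2 = a2 \<or> \<psi> a3 = a3" for \<psi>
    by (rule fix_one_delta[OF that(1) d0 fixd[OF that(1)] that(2)])
  have tme: "\<tau> e = - e" using img_e[OF t] te by blast
  obtain \<sigma> where s: "\<sigma> \<in> field_auts L" and se: "\<sigma> e = - e" and sa: "\<sigma> a1 \<noteq> a1"
  proof (cases "\<tau> a1 = a1")
    case False then show ?thesis using that t tme by blast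
  next
    case True
    then have tfix: "\<tau> a1 = a1 \<and> \<tau> a2 = a2 \<and> \<tau> a3 = a3" using fix_all[OF t] by blast
    show ?thesis
    proof (cases "\<tau>' e = e")
      case False
      then have "\<tau>' e = - e" using img_e[OF t'] by blast
      then show ?thesis using that t' ta by blast
    next
      case True
      let ?s = "\<tau> \<otimes>\<^bsub>G\<^esub> \<tau>'"
      have sG: "?s \<in> field_auts L" using t t' comp_aut by (simp add: gal_mult)
      have "?s e = - e" using True tme in_L by (simp add: mult_apply)
      moreover have "?s a1 = \<tau>' a1"
      proof -
        have "\<tau>' a1 \<in> {a1,a2,a3}" using img_a[OF t'] by simp
        then have "\<tau> (\<tau>' a1) = \<tau>' a1" using tfix by auto
        then show ?thesis using in_L by (simp add: mult_apply)
      qed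
      ultimately show ?thesis using that sG ta by simp
    qed
  qed
  have sG: "\<sigma> \<in> carrier G" using s by (simp add: gal_carrier)
  interpret s: aut L \<sigma> by (rule aut_sf[OF s])
  have nf: "\<sigma> a1 \<noteq> a1" "\<sigma> a2 \<noteq> a2" "\<sigma> a3 \<noteq> a3" using fix_all[OF s] sa by blast+
  have cyc: "(\<sigma> a1 = a2 \<and> \<sigma> a2 = a3 \<and> \<sigma> a3 = a1) \<or> (\<sigma> a1 = a3 \<and> \<sigma> a2 = a1 \<and> \<sigma> a3 = a2)"
    by (rule cycle[OF s d nf])
  have pe: "(\<sigma> ^^ j) e = (if even j then e else - e)" for j
  proof (induction j)
    case 0 then show ?case by simp
  next
    case (Suc j) then show ?case using se in_L by (auto simp: s.uminus)
  qed
  have ga: "(\<sigma> [^]\<^bsub>G\<^esub> j) x = (\<sigma> ^^ j) x" if "x \<in> L" for j :: nat and x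
    by (rule gal_pow[OF sG that])
  have ne: "\<sigma> [^]\<^bsub>G\<^esub> j \<noteq> \<one>\<^bsub>G\<^esub>" if "0 < j" "j < 6" for j :: nat
  proof
    assume eq: "\<sigma> [^]\<^bsub>G\<^esub> j = \<one>\<^bsub>G\<^esub>"
    have fx: "(\<sigma> ^^ j) x = x" if "x \<in> L" for x
      using ga[OF that, of j] eq one_apply[OF that] by simp
    have "j = 1 \<or> j = 2 \<or> j = 3 \<or> j = 4 \<or> j = 5" using \<open>0 < j\<close> \<open>j < 6\<close> by auto
    moreover have "\<not> even j" if "j = 1 \<or> j = 3 \<or> j = 5"
    proof
      assume "even j"
      then show False using that by auto
    qed
    moreover have "j \<noteq> 1 \<and> j \<noteq> 3 \<and> j \<noteq> 5"
    proof -
      have "odd j \<Longrightarrow> False" using fx[OF in_L(4)] pe[of j] e_neq by simp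
      then show ?thesis by auto
    qed
    moreover have "(\<sigma> ^^ 2) a1 \<noteq> a1" "(\<sigma> ^^ 4) a1 \<noteq> a1"
      using cyc d by (auto simp: eval_nat_numeral)
    ultimately show False using fx[OF in_L(5)] by auto
  qed
  define F where "F = (\<lambda>\<psi> :: complex \<Rightarrow> complex. (\<psi> e, \<psi> a1))"
  have injF: "inj_on F (carrier G)"
  proof
    fix \<psi>1 \<psi>2 assume p1: "\<psi>1 \<in> carrier G" and p2: "\<psi>2 \<in> carrier G" and eq: "F \<psi>1 = F \<psi>2"
    let ?i = "inv\<^bsub>G\<^esub> \<psi>2"
    have iG: "?i \<in> carrier G" using p2 by simp
    let ?x = "?i \<otimes>\<^bsub>G\<^esub> \<psi>1"
    have xG: "?x \<in> carrier G" using iG p1 by simp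
    have xa: "?x \<in> field_auts L" using xG by (simp add: gal_carrier)
    have ii: "?i (\<psi>2 y) = y" if "y \<in> L" for y
    proof -
      have "(?i \<otimes>\<^bsub>G\<^esub> \<psi>2) y = y" using p2 that by (simp add: one_apply)
      then show ?thesis using that by (simp add: mult_apply)
    qed
    have "?x e = e" using eq ii in_L by (simp add: F_def mult_apply)
    moreover have "?x a1 = a1" using eq ii in_L by (simp add: F_def mult_apply)
    ultimately have "?x = \<one>\<^bsub>G\<^esub>" using fix_e_a_id[OF xa d] fix_all[OF xa] by blast
    then have "inv\<^bsub>G\<^esub> \<psi>1 = ?i" using grp.inv_equality[OF _ p1 iG] by simp
    then show "\<psi>1 = \<psi>2" using p1 p2 by (metis grp.inv_inv)
  qed
  have Fim: "F ` carrier G \<subseteq> {e, - e} \<times> {a1, a2, a3}"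
    using img_e img_a by (auto simp: F_def gal_carrier)
  have "card ({e, - e} \<times> {a1, a2, a3}) \<le> 6"
  proof -
    have "card ({e, - e} \<times> {a1, a2, a3}) = card {e, - e} * card {a1, a2, a3}"
      by (rule card_cartesian_product)
    also have "\<dots> \<le> 2 * 3" by (intro mult_mono) (auto simp: card_insert_if)
    finally show ?thesis by simp
  qed
  then have cardG: "card (carrier G) \<le> 6"
    using card_inj_on_le[OF injF Fim] by simp
  have finG: "finite (carrier G)"
    using Fim injF by (metis finite.emptyI finite_insert finite_SigmaI finite_imageD finite_subset)
  define S where "S = (\<lambda>j::nat. \<sigma> [^]\<^bsub>G\<^esub> j) ` {..<6}"
  have injS: "inj_on (\<lambda>j::nat. \<sigma> [^]\<^bsub>G\<^esub> j) {..<6}"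
  proof -
    have "i = j" if "i < 6" "j < 6" "i \<le> j" "\<sigma> [^]\<^bsub>G\<^esub> i = \<sigma> [^]\<^bsub>G\<^esub> j" for i j :: nat
    proof (rule ccontr)
      assume "i \<noteq> j"
      have "\<sigma> [^]\<^bsub>G\<^esub> j = \<sigma> [^]\<^bsub>G\<^esub> i \<otimes>\<^bsub>G\<^esub> \<sigma> [^]\<^bsub>G\<^esub> (j - i)"
        using grp.nat_pow_mult[OF sG, of i "j - i"] that by simp
      then have "\<sigma> [^]\<^bsub>G\<^esub> (j - i) = \<one>\<^bsub>G\<^esub>" using that sG by simp
      then show False using ne[of "j - i"] that \<open>i \<noteq> j\<close> by simp
    qed
    then show ?thesis unfolding inj_on_def by (metis lessThan_iff nat_le_linear)
  qed
  have cS: "card S = 6" unfolding S_def using card_image[OF injS] by simp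
  have SG: "S \<subseteq> carrier G" unfolding S_def using sG by auto
  have SeqG: "S = carrier G" using card_seteq[OF finG SG] cS cardG by simp
  have s6: "\<sigma> [^]\<^bsub>G\<^esub> (6::nat) = \<one>\<^bsub>G\<^esub>"
  proof -
    have "\<sigma> [^]\<^bsub>G\<^esub> (6::nat) \<in> S" using SeqG sG by simp
    then obtain j :: nat where j: "j < 6" "\<sigma> [^]\<^bsub>G\<^esub> (6::nat) = \<sigma> [^]\<^bsub>G\<^esub> j"
      unfolding S_def by auto
    show ?thesis
    proof (cases "j = 0")
      case True then show ?thesis using j by simp
    next
      case False
      have "\<sigma> [^]\<^bsub>G\<^esub> (6::nat) = \<sigma> [^]\<^bsub>G\<^esub> j \<otimes>\<^bsub>G\<^esub> \<sigma> [^]\<^bsub>G\<^esub> (6 - j)"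
        using grp.nat_pow_mult[OF sG, of j "6 - j"] j by simp
      then have "\<sigma> [^]\<^bsub>G\<^esub> (6 - j) = \<one>\<^bsub>G\<^esub>" using j sG by simp
      then show ?thesis using ne[of "6 - j"] False j by simp
    qed
  qed
  have pmod: "\<sigma> [^]\<^bsub>G\<^esub> (j mod 6) = \<sigma> [^]\<^bsub>G\<^esub> j" for j :: nat
  proof -
    have "\<sigma> [^]\<^bsub>G\<^esub> j = \<sigma> [^]\<^bsub>G\<^esub> (6 * (j div 6)) \<otimes>\<^bsub>G\<^esub> \<sigma> [^]\<^bsub>G\<^esub> (j mod 6)"
      using grp.nat_pow_mult[OF sG, of "6 * (j div 6)" "j mod 6"] by simp
    also have "\<sigma> [^]\<^bsub>G\<^esub> (6 * (j div 6)) = \<one>\<^bsub>G\<^esub>"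
      using grp.nat_pow_pow[OF sG, of 6 "j div 6"] s6 by simp
    finally show ?thesis using sG by simp
  qed
  define \<phi> where "\<phi> = (\<lambda>z::int. \<sigma> [^]\<^bsub>G\<^esub> (nat z))"
  have carrZ: "carrier ?Z = {0..<6}" by (simp add: carrier_integer_mod_group)
  have hom: "\<phi> \<in> hom ?Z G"
  proof (rule homI)
    show "\<phi> x \<in> carrier G" if "x \<in> carrier ?Z" for x using sG by (simp add: \<phi>_def)
    fix x y assume x: "x \<in> carrier ?Z" and y: "y \<in> carrier ?Z"
    then have x0: "x \<ge> 0" and y0: "y \<ge> 0" by (auto simp: carrZ)
    have "nat ((x + y) mod 6) = (nat x + nat y) mod 6" using x0 y0 by (simp add: nat_mod_distrib nat_add_distrib)
    then have "\<phi> (x \<otimes>\<^bsub>?Z\<^esub> y) = \<sigma> [^]\<^bsub>G\<^esub> (nat x + nat y)" by (simp add: \<phi>_def pmod)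
    also have "\<dots> = \<phi> x \<otimes>\<^bsub>G\<^esub> \<phi> y" using grp.nat_pow_mult[OF sG] by (simp add: \<phi>_def)
    finally show "\<phi> (x \<otimes>\<^bsub>?Z\<^esub> y) = \<phi> x \<otimes>\<^bsub>G\<^esub> \<phi> y" .
  qed
  have "\<phi> ` carrier ?Z = S"
  proof -
    have "\<phi> ` {0..<6} = (\<lambda>j::nat. \<sigma> [^]\<^bsub>G\<^esub> j) ` (nat ` {0..<6})" by (auto simp: \<phi>_def image_image)
    moreover have "nat ` {0..<(6::int)} = {..<6}"
      by (auto simp: image_iff intro!: bexI[where x="int _"])
    ultimately show ?thesis by (simp add: carrZ S_def)
  qed
  moreover have "inj_on \<phi> (carrier ?Z)"
  proof
    fix x y assume xy: "x \<in> carrier ?Z" "y \<in> carrier ?Z" "\<phi> x = \<phi> y"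
    then have nx: "nat x \<in> {..<6}" "nat y \<in> {..<6}" and x0: "x \<ge> 0" "y \<ge> 0"
      by (auto simp: carrZ)
    have "\<sigma> [^]\<^bsub>G\<^esub> (nat x) = \<sigma> [^]\<^bsub>G\<^esub> (nat y)" using xy(3) by (simp only: \<phi>_def)
    then have "nat x = nat y" using inj_onD[OF injS] nx by blast
    then show "x = y" using x0 by (simp add: eq_nat_nat_iff)
  qed
  ultimately have "bij_betw \<phi> (carrier ?Z) (carrier G)" using SeqG by (simp add: bij_betw_def)
  then have "\<phi> \<in> iso ?Z G" using hom by (simp add: iso_def)
  then have "?Z \<cong> G" by (auto simp: is_iso_def)
  then show ?thesis by (rule group.iso_sym[OF group_integer_mod_group])
qed

end


theorem lemma2p4:
  fixes m n c :: int
  assumes "c \<noteq> 0" and "c dvd n ^ 2"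
  defines "f \<equiv> [:c, 0, m ^ 2 - 2 * n, 0, n ^ 2 div c - 2 * m, 0, 1:]"
      and "g \<equiv> [:c, m ^ 2 - 2 * n, n ^ 2 div c - 2 * m, 1:]"
      and "d \<equiv> - (4 * m ^ 3 * c - m ^ 2 * n ^ 2 - 18 * m * n * c + 4 * n ^ 3 + 27 * c ^ 2)"
  shows "galois_group f \<cong> integer_mod_group 6 \<longleftrightarrow>
           (\<not> (\<exists>k::int. - c = k ^ 2)) \<and>
           irreducible (map_poly (of_int :: int \<Rightarrow> rat) g) \<and>
           (\<exists>k::int. d = k ^ 2)"
proof -
  obtain b1 b2 b3 :: complex where
    v: "of_int c = - ((b1*b2*b3)^2)" "of_int m = -(b1*b2+b1*b3+b2*b3)" "of_int n = b1*b2*b3*(b1+b2+b3)"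
    using exists_roots[where m=m and n=n and c=c] assms(1) by blast
  interpret cf: cfg m n c b1 b2 b3
    using assms(1,2) v by (simp add: cfg_def)
  have f_eq: "f = cf.f" by (simp add: f_def cf.f_def)
  have g_eq: "g = cf.g" by (simp add: g_def cf.g_def)
  have d_eq: "d = cf.d" by (simp add: d_def cf.d_def)
  show ?thesis
    unfolding f_eq g_eq d_eq using cf.forward cf.backward by blast
qed

end
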